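(* For complex parameters $a,c$, \begin{align*} \sum_{n=0}^\infty \sum_{j=-n}^n (-1)^j \bigl(1-q^{4n+2}\bigr)q^{j^2-2n}\frac{\bigl(q^2/a, q^2/c; q^2\bigr)_n (ac)^n}{\bigl(q^2a, q^2c; q^2\bigr)_n} =\frac{\bigl(q^2, ac; q^2\bigr)_\infty}{\bigl(q^2a, q^2c; q^2\bigr)_\infty}\sum_{n=0}^\infty \frac{\bigl(q^2/a, q^2/c, q; q^2\bigr)_n}{(-q; q)_{2n} \bigl(q^2; q^2\bigr)_n}\biggl(\frac{ac}{q^2}\biggr)^n. \end{align*}
   Context: Throughout, $q$ is a complex number with $0<|q|<1$. For $x\in\mathbb{C}$ and base $p\in\{q,q^2\}$, $(x;p)_\infty=\prod_{k=0}^\infty(1-xp^k)$ and, for an integer $n\ge 0$, $(x;p)_n=\prod_{k=0}^{n-1}(1-xp^k)$; also $(x_1,\dots,x_m;p)_n=(x_1;p)_n\cdots(x_m;p)_n$ for $n$ an integer or $\infty$. *)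

theory Defs
  imports "HOL-Analysis.Analysis"
begin

definition qpoch :: "complex \<Rightarrow> complex \<Rightarrow> nat \<Rightarrow> complex" where
  "qpoch x p n = (\<Prod>k<n. 1 - x * p ^ k)"

definition qpoch_inf :: "complex \<Rightarrow> complex \<Rightarrow> complex" where
  "qpoch_inf x p = (\<Prod>k. 1 - x * p ^ k)"

end

theory Submission
  imports Defs
begin


lemma qpoch_0 [simp]: "qpoch x p 0 = 1"
  by (simp add: qpoch_def)

lemma qpoch_Suc: "qpoch x p (Suc n) = qpoch x p n * (1 - x * p ^ n)"
  by (simp add: qpoch_def)

lemma qpoch_add: "qpoch x p (m + n) = qpoch x p m * qpoch (x * p ^ m) p n"
proof (induction n)
  case 0 then show ?case by simp
next
  case (Suc n) then show ?case
    by (simp add: qpoch_Suc power_add mult_ac)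
qed

lemma qpoch_norm_le:
  assumes "norm p < 1"
  shows "norm (qpoch x p n) \<le> exp (norm x / (1 - norm p))"
proof -
  have "norm (qpoch x p n) = (\<Prod>k<n. norm (1 - x * p ^ k))"
    by (simp add: qpoch_def prod_norm)
  also have "\<dots> \<le> (\<Prod>k<n. 1 + norm x * norm p ^ k)"
  proof (intro prod_mono conjI)
    fix k
    have "norm (1 - x * p ^ k) \<le> norm (1::complex) + norm (x * p ^ k)"
      by (rule norm_triangle_ineq4)
    then show "norm (1 - x * p ^ k) \<le> 1 + norm x * norm p ^ k"
      by (simp add: norm_mult norm_power)
  qed simp
  also have "\<dots> \<le> exp (\<Sum>k<n. norm x * norm p ^ k)"
    by (rule prod_le_exp_sum) simp
  also have "(\<Sum>k<n. norm x * norm p ^ k) \<le> norm x / (1 - norm p)"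
  proof -
    have s: "(\<lambda>k. norm p ^ k) sums (1 / (1 - norm p))"
      using assms by (intro geometric_sums) simp
    have "(\<Sum>k<n. norm p ^ k) \<le> (\<Sum>k. norm p ^ k)"
      using s assms by (intro sum_le_suminf) (auto simp: sums_summable)
    then have "(\<Sum>k<n. norm p ^ k) \<le> 1 / (1 - norm p)"
      using s by (simp add: sums_unique[symmetric])
    then have "norm x * (\<Sum>k<n. norm p ^ k) \<le> norm x * (1 / (1 - norm p))"
      by (intro mult_left_mono) auto
    then show ?thesis by (simp add: sum_distrib_left)
  qed
  then have "exp (\<Sum>k<n. norm x * norm p ^ k) \<le> exp (norm x / (1 - norm p))"
    by simp
  finally show ?thesis .
qed

lemma qpoch_convergent_prod:
  fixes x p :: complex
  assumes "norm p < 1"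
  shows "convergent_prod (\<lambda>k. 1 - x * p ^ k)"
proof -
  have "summable (\<lambda>k. norm (x * p ^ k))"
    apply (simp only: norm_mult norm_power)
    apply (intro summable_mult summable_geometric)
    using assms by simp
  then have "summable (\<lambda>k. norm ((1 - x * p ^ k) - 1))"
    by simp
  then show ?thesis
    by (intro abs_convergent_prod_imp_convergent_prod summable_imp_abs_convergent_prod)
qed

lemma qpoch_tendsto:
  assumes "norm p < 1"
  shows "(\<lambda>n. qpoch x p n) \<longlonglongrightarrow> qpoch_inf x p"
  unfolding qpoch_def qpoch_inf_def
  by (intro has_prod_imp_tendsto' convergent_prod_has_prod qpoch_convergent_prod assms)

lemma qpoch_inf_nonzero:
  assumes "norm p < 1" "\<And>k. 1 - x * p ^ k \<noteq> 0"
  shows "qpoch_inf x p \<noteq> 0"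
  unfolding qpoch_inf_def
  by (intro prodinf_nonzero qpoch_convergent_prod assms)

lemma qpoch_nonzero_factor:
  fixes x p :: complex
  assumes "\<And>n. qpoch x p n \<noteq> 0"
  shows "1 - x * p ^ k \<noteq> 0"
  using assms[of "Suc k"] by (simp add: qpoch_Suc)

lemma qpoch_inf_split:
  assumes "norm p < 1"
  shows "qpoch_inf x p = qpoch x p m * qpoch_inf (x * p ^ m) p"
proof -
  have "(\<lambda>n. qpoch x p (m + n)) \<longlonglongrightarrow> qpoch_inf x p"
    using LIMSEQ_ignore_initial_segment[OF qpoch_tendsto[OF assms], of x m] by (simp add: add.commute)
  moreover have "(\<lambda>n. qpoch x p (m + n)) \<longlonglongrightarrow> qpoch x p m * qpoch_inf (x * p ^ m) p"
    unfolding qpoch_add by (intro tendsto_mult tendsto_const qpoch_tendsto assms)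
  ultimately show ?thesis by (rule LIMSEQ_unique)
qed

lemma qpoch_lower:
  assumes "norm p < 1" "\<And>n. qpoch x p n \<noteq> 0"
  shows "\<exists>d>0. \<forall>n. norm (qpoch x p n) \<ge> d"
proof -
  have L: "qpoch_inf x p \<noteq> 0"
    using assms by (intro qpoch_inf_nonzero qpoch_nonzero_factor) auto
  define l where "l = norm (qpoch_inf x p)"
  have lpos: "l > 0" using L by (simp add: l_def)
  have "(\<lambda>n. norm (qpoch x p n)) \<longlonglongrightarrow> l"
    unfolding l_def by (intro tendsto_norm qpoch_tendsto assms)
  then have "eventually (\<lambda>n. norm (qpoch x p n) > l / 2) sequentially"
    using lpos by (intro order_tendstoD) auto
  then obtain N where N: "\<And>n. n \<ge> N \<Longrightarrow> norm (qpoch x p n) > l / 2"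
    by (auto simp: eventually_sequentially)
  define d where "d = Min (insert (l/2) ((\<lambda>n. norm (qpoch x p n)) ` {..<N}))"
  have "d > 0" unfolding d_def using lpos assms(2) by (subst Min_gr_iff) auto
  moreover have "norm (qpoch x p n) \<ge> d" for n
  proof (cases "n < N")
    case True then show ?thesis unfolding d_def by (intro Min_le) auto
  next
    case False
    then have "norm (qpoch x p n) > l/2" using N by simp
    moreover have "d \<le> l/2" unfolding d_def by (intro Min_le) auto
    ultimately show ?thesis by simp
  qed
  ultimately show ?thesis by blast
qed



lemma qpoch_Suc': "qpoch x p (Suc n) = (1 - x) * qpoch (x * p) p n"
  using qpoch_add[of x p 1 n] by (simp add: qpoch_def)

lemma qpoch_pp_nonzero:
  fixes p :: complex
  assumes "norm p < 1"
  shows "qpoch p p n \<noteq> 0"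
proof -
  have "1 - p * p ^ k \<noteq> 0" for k
  proof
    assume "1 - p * p ^ k = 0"
    then have "p ^ Suc k = 1" by simp
    then have "norm p ^ Suc k = 1" by (metis norm_one norm_power)
    moreover have "norm p ^ Suc k < 1" using assms by (metis power_less_one_iff norm_ge_zero zero_less_Suc)
    ultimately show False by simp
  qed
  then show ?thesis by (simp add: qpoch_def)
qed

definition TT :: "complex \<Rightarrow> complex \<Rightarrow> complex \<Rightarrow> nat \<Rightarrow> nat \<Rightarrow> complex" where
  "TT p a c m k = qpoch (p^(m+1)/a) p k * qpoch (p^(m+1)/c) p k * (a*c/p)^k
      / (qpoch p p k * qpoch p p (k + 2*m))"

definition WW :: "complex \<Rightarrow> complex \<Rightarrow> complex \<Rightarrow> nat \<Rightarrow> nat \<Rightarrow> complex" where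
  "WW p a c m K = TT p a c (Suc m) K * p^m *
      (a + c - p^m * (a*c + p) - p^m * p^(K+2) * (1 - p * (p^m)^2))"

lemma cert_alg:
  fixes p a c u x X1 X2 P1 Q Y d1 d2 d3 :: complex
  assumes nz: "p \<noteq> 0" "a \<noteq> 0" "c \<noteq> 0" "P1 \<noteq> 0" "Q \<noteq> 0" "d1 \<noteq> 0" "d2 \<noteq> 0" "d3 \<noteq> 0"
  assumes d: "d1 = 1 - p*x" "d2 = 1 - p^2*u^2*x" "d3 = 1 - p^3*u^2*x"
  defines "y \<equiv> a*c/p"
  shows "X1*X2*Y/(P1*Q*d2) * u * (a + c - u*(a*c+p) - u*p^2*x*(1-p*u^2))
    + (1-p*u/a)*X1*(1-p*u/c)*X2*Y*y/(P1*d1*Q)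
    - (1-a*u)*(1-c*u) * (X1*(1-p^2*u*x/a)*X2*(1-p^2*u*x/c)*Y*y/(P1*d1*Q*d2*d3))
   = X1*(1-p^2*u*x/a)*X2*(1-p^2*u*x/c)*Y*y/(P1*d1*Q*d2*d3)
      * u * (a + c - u*(a*c+p) - u*p^3*x*(1-p*u^2))"
proof -
  have e: "X1*X2*Y*u*(a + c - u*(a*c+p) - u*p^2*x*(1-p*u^2)) * (p*d1*d3)
    + (a - p*u)*X1*(c-p*u)*X2*Y*(d2*d3)
    - (1-a*u)*(1-c*u) * (X1*(a-p^2*u*x)*X2*(c-p^2*u*x)*Y)
   = X1*(a-p^2*u*x)*X2*(c-p^2*u*x)*Y * u * (a + c - u*(a*c+p) - u*p^3*x*(1-p*u^2))"
    unfolding d by (simp add: algebra_simps power2_eq_square power3_eq_cube)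
  define M where "M = p*P1*Q*d1*d2*d3"
  have M: "M \<noteq> 0" using nz by (simp add: M_def)
  define B2 where "B2 = a + c - u*(a*c+p) - u*p^2*x*(1-p*u^2)"
  define B3 where "B3 = a + c - u*(a*c+p) - u*p^3*x*(1-p*u^2)"
  have t1: "X1*X2*Y/(P1*Q*d2) * u * B2 * M = X1*X2*Y*u*B2*(p*d1*d3)"
    using nz unfolding M_def by (simp add: field_simps)
  have t2: "(1-p*u/a)*X1*(1-p*u/c)*X2*Y*y/(P1*d1*Q) * M = (a - p*u)*X1*(c-p*u)*X2*Y*(d2*d3)"
    using nz unfolding M_def y_def by (simp add: field_simps)
  have t3: "(X1*(1-p^2*u*x/a)*X2*(1-p^2*u*x/c)*Y*y/(P1*d1*Q*d2*d3)) * M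
     = X1*(a-p^2*u*x)*X2*(c-p^2*u*x)*Y"
    using nz unfolding M_def y_def by (simp add: field_simps)
  have "(X1*X2*Y/(P1*Q*d2) * u * B2
    + (1-p*u/a)*X1*(1-p*u/c)*X2*Y*y/(P1*d1*Q)
    - (1-a*u)*(1-c*u) * (X1*(1-p^2*u*x/a)*X2*(1-p^2*u*x/c)*Y*y/(P1*d1*Q*d2*d3))) * M
    = (X1*(1-p^2*u*x/a)*X2*(1-p^2*u*x/c)*Y*y/(P1*d1*Q*d2*d3) * u * B3) * M"
  proof -
    have "(X1*(1-p^2*u*x/a)*X2*(1-p^2*u*x/c)*Y*y/(P1*d1*Q*d2*d3) * u * B3) * M
       = ((X1*(1-p^2*u*x/a)*X2*(1-p^2*u*x/c)*Y*y/(P1*d1*Q*d2*d3)) * M) * u * B3"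
      by (simp add: mult_ac)
    also have "\<dots> = X1*(a-p^2*u*x)*X2*(c-p^2*u*x)*Y * u * B3" by (simp only: t3)
    finally have r: "(X1*(1-p^2*u*x/a)*X2*(1-p^2*u*x/c)*Y*y/(P1*d1*Q*d2*d3) * u * B3) * M
       = X1*(a-p^2*u*x)*X2*(c-p^2*u*x)*Y * u * B3" .
    have "(X1*X2*Y/(P1*Q*d2) * u * B2
    + (1-p*u/a)*X1*(1-p*u/c)*X2*Y*y/(P1*d1*Q)
    - (1-a*u)*(1-c*u) * (X1*(1-p^2*u*x/a)*X2*(1-p^2*u*x/c)*Y*y/(P1*d1*Q*d2*d3))) * M
     = X1*X2*Y/(P1*Q*d2) * u * B2 * M + (1-p*u/a)*X1*(1-p*u/c)*X2*Y*y/(P1*d1*Q) * M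
       - (1-a*u)*(1-c*u) * ((X1*(1-p^2*u*x/a)*X2*(1-p^2*u*x/c)*Y*y/(P1*d1*Q*d2*d3)) * M)"
      by (simp add: algebra_simps)
    also have "\<dots> = X1*X2*Y*u*B2*(p*d1*d3) + (a - p*u)*X1*(c-p*u)*X2*Y*(d2*d3)
        - (1-a*u)*(1-c*u) * (X1*(a-p^2*u*x)*X2*(c-p^2*u*x)*Y)"
      by (simp only: t1 t2 t3)
    also have "\<dots> = X1*(a-p^2*u*x)*X2*(c-p^2*u*x)*Y * u * B3"
      using e unfolding B2_def B3_def by (simp add: algebra_simps)
    finally show ?thesis using r by simp
  qed
  then have "X1*X2*Y/(P1*Q*d2) * u * B2
    + (1-p*u/a)*X1*(1-p*u/c)*X2*Y*y/(P1*d1*Q)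
    - (1-a*u)*(1-c*u) * (X1*(1-p^2*u*x/a)*X2*(1-p^2*u*x/c)*Y*y/(P1*d1*Q*d2*d3))
    = X1*(1-p^2*u*x/a)*X2*(1-p^2*u*x/c)*Y*y/(P1*d1*Q*d2*d3) * u * B3"
    by (simp only: mult_right_cancel[OF M])
  then show ?thesis unfolding B2_def B3_def .
qed



lemma pow_ne1:
  fixes p :: complex
  assumes "norm p < 1" "n > 0"
  shows "p ^ n \<noteq> 1"
proof
  assume "p ^ n = 1"
  then have "norm p ^ n = 1" by (metis norm_one norm_power)
  moreover have "norm p ^ n < 1" using assms by (simp add: power_less_one_iff)
  ultimately show False by simp
qed

lemma cert:
  fixes p a c :: complex
  assumes p1: "norm p < 1" and p0: "p \<noteq> 0" and a0: "a \<noteq> 0" and c0: "c \<noteq> 0"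
  shows "(\<Sum>k\<le>K. TT p a c m k - (1 - a*p^m)*(1 - c*p^m) * TT p a c (Suc m) k) = WW p a c m K"
proof (induction K)
  case 0
  define u where "u = p^m"
  define Q0 where "Q0 = qpoch p p (2*m)"
  have Q0: "Q0 \<noteq> 0" unfolding Q0_def by (rule qpoch_pp_nonzero[OF p1])
  have dA: "1 - p*u^2 \<noteq> 0" "1 - p^2*u^2 \<noteq> 0"
  proof -
    have hu: "u^2 = p^(2*m)" unfolding u_def power_mult[symmetric] by (simp add: mult.commute)
    have "p*u^2 = p^(Suc (2*m))" "p^2*u^2 = p^(Suc (Suc (2*m)))" unfolding hu
      by (simp_all add: power2_eq_square)
    then show "1 - p*u^2 \<noteq> 0" "1 - p^2*u^2 \<noteq> 0"
      using pow_ne1[OF p1] by (metis right_minus_eq zero_less_Suc)+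
  qed
  have e1: "TT p a c m 0 = 1/Q0" by (simp add: TT_def Q0_def)
  have pm: "p^(m*2) = p^m*p^m" by (metis mult_2_right power_add)
  have e2: "TT p a c (Suc m) 0 = 1/(Q0*(1 - p*u^2)*(1 - p^2*u^2))"
  proof -
    have "qpoch p p (2 * Suc m) = Q0*(1 - p*u^2)*(1 - p^2*u^2)"
      unfolding Q0_def u_def
      using pm by (simp add: qpoch_Suc mult_ac power2_eq_square)
    then show ?thesis by (simp add: TT_def)
  qed
  have e3: "WW p a c m 0 = TT p a c (Suc m) 0 * u * (a + c - u*(a*c+p) - u*p^2*(1-p*u^2))"
    by (simp add: WW_def u_def power2_eq_square mult_ac)
  have "1/Q0 - (1 - a*u)*(1 - c*u) * (1/(Q0*(1 - p*u^2)*(1 - p^2*u^2)))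
      = 1/(Q0*(1 - p*u^2)*(1 - p^2*u^2)) * u * (a + c - u*(a*c+p) - u*p^2*(1-p*u^2))"
  proof -
    define d where "d = 1 - p*u^2"
    define d' where "d' = 1 - p^2*u^2"
    have dd: "d \<noteq> 0" "d' \<noteq> 0" using dA unfolding d_def d'_def by auto
    have k: "d*d' - (1 - a*u)*(1 - c*u) = u * (a + c - u*(a*c+p) - u*p^2*(1-p*u^2))"
      unfolding d_def d'_def by (simp add: algebra_simps power2_eq_square)
    have "1/Q0 - (1 - a*u)*(1 - c*u) * (1/(Q0*d*d')) = (d*d' - (1 - a*u)*(1 - c*u))/(Q0*d*d')"
      using Q0 dd by (simp add: field_simps)
    also have "\<dots> = 1/(Q0*d*d') * u * (a + c - u*(a*c+p) - u*p^2*(1-p*u^2))"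
      unfolding k by simp
    finally show ?thesis unfolding d_def d'_def .
  qed
  then show ?case using e1 e2 e3 by (simp add: u_def)
next
  case (Suc K)
  have pm: "p^(m*2) = p^m*p^m" by (metis mult_2_right power_add)
  define u where "u = p^m"
  define x where "x = p^K"
  define X1 where "X1 = qpoch (p^(m+2)/a) p K"
  define X2 where "X2 = qpoch (p^(m+2)/c) p K"
  define Y where "Y = (a*c/p)^K"
  define P1 where "P1 = qpoch p p K"
  define Q where "Q = qpoch p p (K + 2*m + 1)"
  define d1 where "d1 = 1 - p*x"
  define d2 where "d2 = 1 - p^2*u^2*x"
  define d3 where "d3 = 1 - p^3*u^2*x"
  have hd1: "qpoch p p (Suc K) = P1 * d1"
    unfolding P1_def d1_def x_def by (simp add: qpoch_Suc)
  have hd2: "qpoch p p (K + 2 * Suc m) = Q * d2"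
  proof -
    have "K + 2 * Suc m = Suc (K + 2*m + 1)" by simp
    then show ?thesis unfolding Q_def d2_def u_def x_def
      by (simp only: qpoch_Suc) (simp add: pm power_add mult_ac power2_eq_square)
  qed
  have hd3: "qpoch p p (Suc K + 2 * Suc m) = Q * d2 * d3"
  proof -
    have "Suc K + 2 * Suc m = Suc (Suc (K + 2*m + 1))" by simp
    then show ?thesis unfolding Q_def d2_def d3_def u_def x_def
      by (simp only: qpoch_Suc) (simp add: pm power_add mult_ac power2_eq_square power3_eq_cube)
  qed
  have nz: "P1 \<noteq> 0" "Q \<noteq> 0" "d1 \<noteq> 0" "d2 \<noteq> 0" "d3 \<noteq> 0"
    using qpoch_pp_nonzero[OF p1] hd1 hd2 hd3 unfolding P1_def Q_def
    by (metis mult_eq_0_iff)+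
  have f1: "TT p a c (Suc m) K = X1*X2*Y/(P1*Q*d2)"
    unfolding TT_def X1_def X2_def Y_def P1_def hd2 by (simp add: numeral_2_eq_2)
  have f2: "TT p a c m (Suc K) = (1-p*u/a)*X1*(1-p*u/c)*X2*Y*(a*c/p)/(P1*d1*Q)"
  proof -
    have "Suc K + 2*m = K + 2*m + 1" by simp
    then show ?thesis
      unfolding TT_def X1_def X2_def Y_def P1_def Q_def u_def hd1
      by (simp add: qpoch_Suc' power_add numeral_2_eq_2 field_simps)
  qed
  have f3: "TT p a c (Suc m) (Suc K) = X1*(1-p^2*u*x/a)*X2*(1-p^2*u*x/c)*Y*(a*c/p)/(P1*d1*Q*d2*d3)"
    unfolding TT_def X1_def X2_def Y_def P1_def hd1 hd3 u_def x_def
    by (simp add: qpoch_Suc power_add numeral_2_eq_2 field_simps)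
  have f4: "WW p a c m K = TT p a c (Suc m) K * u * (a + c - u*(a*c+p) - u*p^2*x*(1-p*u^2))"
    unfolding WW_def u_def x_def by (simp add: power_add mult_ac power2_eq_square power3_eq_cube)
  have f5: "WW p a c m (Suc K) = TT p a c (Suc m) (Suc K) * u * (a + c - u*(a*c+p) - u*p^3*x*(1-p*u^2))"
    unfolding WW_def u_def x_def by (simp add: power_add mult_ac power2_eq_square power3_eq_cube)
  have "(\<Sum>k\<le>Suc K. TT p a c m k - (1 - a*p^m)*(1 - c*p^m) * TT p a c (Suc m) k)
     = WW p a c m K + (TT p a c m (Suc K) - (1 - a*u)*(1 - c*u) * TT p a c (Suc m) (Suc K))"
    using Suc.IH by (simp add: u_def)
  also have "\<dots> = WW p a c m (Suc K)"
    unfolding f1 f2 f3 f4 f5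
    using cert_alg[OF p0 a0 c0 nz d1_def d2_def d3_def, of X1 X2 Y] by (simp add: add_diff_eq)
  finally show ?case .
qed



lemma qpoch_pp_lower:
  fixes p :: complex
  assumes "norm p < 1"
  shows "\<exists>d>0. \<forall>n. norm (qpoch p p n) \<ge> d"
  using qpoch_lower[OF assms qpoch_pp_nonzero[OF assms]] .

lemma qpoch_norm_le':
  fixes p x :: complex
  assumes "norm p < 1" "norm x \<le> R"
  shows "norm (qpoch x p n) \<le> exp (R / (1 - norm p))"
proof -
  have "norm (qpoch x p n) \<le> exp (norm x / (1 - norm p))" by (rule qpoch_norm_le[OF assms(1)])
  also have "\<dots> \<le> exp (R / (1 - norm p))"
    using assms by (simp add: divide_right_mono)
  finally show ?thesis .
qed

lemma norm_pow_div_le: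
  fixes p a :: complex
  assumes "norm p < 1"
  shows "norm (p^(Suc m)/a) \<le> norm (p/a)"
proof -
  have "norm (p^(Suc m)/a) = norm (p/a) * norm p ^ m"
    by (simp add: norm_divide norm_mult norm_power)
  also have "\<dots> \<le> norm (p/a) * 1"
    using assms by (intro mult_left_mono power_le_one) auto
  finally show ?thesis by simp
qed

lemma TT_bound:
  fixes p a c :: complex
  assumes p1: "norm p < 1"
  shows "\<exists>C\<ge>0. \<forall>m k. norm (TT p a c m k) \<le> C * norm (a*c/p) ^ k"
proof -
  obtain d where d: "d > 0" "\<And>n. norm (qpoch p p n) \<ge> d"
    using qpoch_pp_lower[OF p1] by blast
  define E1 where "E1 = exp (norm (p/a) / (1 - norm p))"
  define E2 where "E2 = exp (norm (p/c) / (1 - norm p))"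
  define C where "C = E1 * E2 / (d * d)"
  have "C \<ge> 0" unfolding C_def E1_def E2_def using d by simp
  moreover have "norm (TT p a c m k) \<le> C * norm (a*c/p) ^ k" for m k
  proof -
    have n1: "norm (qpoch (p^(m+1)/a) p k) \<le> E1"
      unfolding E1_def by (rule qpoch_norm_le'[OF p1]) (use norm_pow_div_le[OF p1, of m a] in simp)
    have n2: "norm (qpoch (p^(m+1)/c) p k) \<le> E2"
      unfolding E2_def by (rule qpoch_norm_le'[OF p1]) (use norm_pow_div_le[OF p1, of m c] in simp)
    have "norm (TT p a c m k) = norm (qpoch (p^(m+1)/a) p k) * norm (qpoch (p^(m+1)/c) p k)
        * norm (a*c/p) ^ k / (norm (qpoch p p k) * norm (qpoch p p (k + 2*m)))"
      by (simp add: TT_def norm_mult norm_divide norm_power)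
    also have "\<dots> \<le> E1 * E2 * norm (a*c/p) ^ k / (d * d)"
      using d n1 n2
      by (intro frac_le mult_mono mult_nonneg_nonneg) (auto simp: E1_def E2_def)
    finally show ?thesis unfolding C_def by (simp add: field_simps)
  qed
  ultimately show ?thesis by blast
qed

lemma geom_bound_summable:
  fixes f :: "nat \<Rightarrow> complex"
  assumes "norm r < 1" "\<And>k. norm (f k) \<le> C * norm r ^ k"
  shows "summable f"
proof (rule summable_comparison_test[where g="\<lambda>k. C * norm r ^ k"])
  show "\<exists>N. \<forall>n\<ge>N. norm (f n) \<le> C * norm r ^ n" using assms by blast
  show "summable (\<lambda>k. C * norm r ^ k)" using assms by (intro summable_mult summable_geometric) simp
qed

lemma geom_bound_tendsto0:
  fixes f :: "nat \<Rightarrow> complex"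
  assumes "norm r < 1" "\<And>k. norm (f k) \<le> C * norm r ^ k"
  shows "f \<longlonglongrightarrow> 0"
proof -
  have "summable f" by (rule geom_bound_summable[OF assms])
  then show ?thesis by (rule summable_LIMSEQ_zero)
qed

definition II :: "complex \<Rightarrow> complex \<Rightarrow> complex \<Rightarrow> nat \<Rightarrow> complex" where
  "II p a c m = (\<Sum>k. TT p a c m k)"

lemma TT_summable:
  fixes p a c :: complex
  assumes p1: "norm p < 1" and y1: "norm (a*c/p) < 1"
  shows "summable (TT p a c m)"
  using TT_bound[OF p1, of a c] geom_bound_summable[OF y1] by blast

lemma TT_tendsto0:
  fixes p a c :: complex
  assumes p1: "norm p < 1" and y1: "norm (a*c/p) < 1"
  shows "TT p a c m \<longlonglongrightarrow> 0"
  using TT_bound[OF p1, of a c] geom_bound_tendsto0[OF y1] by blast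

lemma II_rec:
  fixes p a c :: complex
  assumes p1: "norm p < 1" and p0: "p \<noteq> 0" and a0: "a \<noteq> 0" and c0: "c \<noteq> 0"
    and y1: "norm (a*c/p) < 1"
  shows "II p a c m = (1 - a*p^m)*(1 - c*p^m) * II p a c (Suc m)"
proof -
  define lam where "lam = (1 - a*p^m)*(1 - c*p^m)"
  define f where "f = (\<lambda>k. TT p a c m k - lam * TT p a c (Suc m) k)"
  have s1: "summable (TT p a c m)" "summable (TT p a c (Suc m))"
    using TT_summable[OF p1 y1] by auto
  have "f sums (II p a c m - lam * II p a c (Suc m))"
    unfolding f_def II_def using s1 by (intro sums_diff sums_mult summable_sums)
  moreover have "f sums 0"
  proof -
    have "(\<lambda>K. \<Sum>k\<le>K. f k) = WW p a c m"
      unfolding f_def lam_def using cert[OF p1 p0 a0 c0] by auto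
    moreover have "WW p a c m \<longlonglongrightarrow> 0 * p^m * (a + c - p^m*(a*c+p) - p^m * 0 * (1 - p*(p^m)^2))"
    proof -
      have "(\<lambda>K. p^(K+2)) \<longlonglongrightarrow> 0"
        using LIMSEQ_ignore_initial_segment[OF LIMSEQ_power_zero[of p], of 2] p1 by simp
      then show ?thesis unfolding WW_def
        by (intro tendsto_intros TT_tendsto0[OF p1 y1])
    qed
    ultimately show ?thesis by (simp add: sums_def_le)
  qed
  ultimately have "II p a c m - lam * II p a c (Suc m) = 0" by (rule sums_unique2)
  then show ?thesis unfolding lam_def by simp
qed



lemma qpoch_cont:
  fixes p :: complex
  assumes "x \<longlonglongrightarrow> x0"
  shows "(\<lambda>n. qpoch (x n) p k) \<longlonglongrightarrow> qpoch x0 p k"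
  unfolding qpoch_def by (intro tendsto_prod tendsto_intros assms)

lemma qpoch_pp_inf_nonzero:
  fixes p :: complex
  assumes "norm p < 1"
  shows "qpoch_inf p p \<noteq> 0"
  by (intro qpoch_inf_nonzero assms qpoch_nonzero_factor qpoch_pp_nonzero)

definition KK :: "complex \<Rightarrow> complex \<Rightarrow> complex" where
  "KK p y = (\<Sum>k. y^k / (qpoch p p k * qpoch_inf p p))"

lemma II_lim:
  fixes p a c :: complex
  assumes p1: "norm p < 1" and y1: "norm (a*c/p) < 1"
  shows "(\<lambda>M. II p a c M) \<longlonglongrightarrow> KK p (a*c/p)"
proof -
  obtain C where C: "C \<ge> 0" "\<And>m k. norm (TT p a c m k) \<le> C * norm (a*c/p) ^ k"
    using TT_bound[OF p1, of a c] by blast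
  have lim: "(\<lambda>n. TT p a c n k) \<longlonglongrightarrow> (a*c/p)^k / (qpoch p p k * qpoch_inf p p)" for k
  proof -
    have z: "(\<lambda>n. p^(n+1)/a) \<longlonglongrightarrow> 0" "(\<lambda>n. p^(n+1)/c) \<longlonglongrightarrow> 0"
      using LIMSEQ_ignore_initial_segment[OF LIMSEQ_power_zero[of p], of 1] p1
      by (auto intro!: tendsto_divide_zero)
    have q0: "qpoch 0 p k = 1" by (simp add: qpoch_def)
    have sub: "(\<lambda>n. qpoch p p (k + 2*n)) \<longlonglongrightarrow> qpoch_inf p p"
    proof -
      have "strict_mono (\<lambda>n::nat. k + 2*n)" by (intro strict_monoI) simp
      from LIMSEQ_subseq_LIMSEQ[OF qpoch_tendsto[OF p1] this] show ?thesis by (simp add: o_def)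
    qed
    have "(\<lambda>n. qpoch (p^(n+1)/a) p k * qpoch (p^(n+1)/c) p k * (a*c/p)^k
      / (qpoch p p k * qpoch p p (k + 2*n))) \<longlonglongrightarrow> qpoch 0 p k * qpoch 0 p k * (a*c/p)^k / (qpoch p p k * qpoch_inf p p)"
      using qpoch_pp_nonzero[OF p1, of k] qpoch_pp_inf_nonzero[OF p1]
      by (intro tendsto_intros qpoch_cont z sub) auto
    then show ?thesis unfolding TT_def q0 by simp
  qed
  have "eventually (\<lambda>n. summable (\<lambda>k. norm (TT p a c n k))) sequentially \<and>
        summable (\<lambda>n. norm ((a*c/p)^n / (qpoch p p n * qpoch_inf p p))) \<and>
        ((\<lambda>n. \<Sum>k. TT p a c n k) \<longlongrightarrow> (\<Sum>k. (a*c/p)^k / (qpoch p p k * qpoch_inf p p))) sequentially"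
  proof (rule tannerys_theorem[where M = "\<lambda>k. C * norm (a*c/p) ^ k"])
    show "\<And>k. (\<lambda>n. TT p a c n k) \<longlonglongrightarrow> (a*c/p)^k / (qpoch p p k * qpoch_inf p p)" by (rule lim)
    show "\<forall>\<^sub>F (k, n) in sequentially \<times>\<^sub>F sequentially. norm (TT p a c n k) \<le> C * norm (a*c/p) ^ k"
      using C by (intro always_eventually) auto
    show "summable (\<lambda>k. C * norm (a*c/p) ^ k)"
      using y1 by (intro summable_mult summable_geometric) simp
  qed simp
  then show ?thesis unfolding II_def KK_def by blast
qed

lemma II_iter:
  fixes p a c :: complex
  assumes p1: "norm p < 1" and p0: "p \<noteq> 0" and a0: "a \<noteq> 0" and c0: "c \<noteq> 0"
    and y1: "norm (a*c/p) < 1"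
  shows "II p a c m = qpoch (a*p^m) p L * qpoch (c*p^m) p L * II p a c (m + L)"
proof (induction L)
  case 0 then show ?case by simp
next
  case (Suc L)
  then show ?case
    using II_rec[OF p1 p0 a0 c0 y1, of "m+L"]
    by (simp add: qpoch_Suc power_add mult_ac)
qed

lemma II_closed:
  fixes p a c :: complex
  assumes p1: "norm p < 1" and p0: "p \<noteq> 0" and a0: "a \<noteq> 0" and c0: "c \<noteq> 0"
    and y1: "norm (a*c/p) < 1"
  shows "II p a c m = qpoch_inf (a*p^m) p * qpoch_inf (c*p^m) p * KK p (a*c/p)"
proof -
  have "(\<lambda>L. qpoch (a*p^m) p L * qpoch (c*p^m) p L * II p a c (m + L))
     \<longlonglongrightarrow> qpoch_inf (a*p^m) p * qpoch_inf (c*p^m) p * KK p (a*c/p)"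
  proof (intro tendsto_mult qpoch_tendsto p1)
    show "(\<lambda>L. II p a c (m + L)) \<longlonglongrightarrow> KK p (a*c/p)"
      using LIMSEQ_ignore_initial_segment[OF II_lim[OF p1 y1], of m] by (simp add: add.commute)
  qed
  moreover have "(\<lambda>L. qpoch (a*p^m) p L * qpoch (c*p^m) p L * II p a c (m + L)) = (\<lambda>L. II p a c m)"
    using II_iter[OF p1 p0 a0 c0 y1] by simp
  ultimately show ?thesis using LIMSEQ_unique tendsto_const by metis
qed

definition EE :: "complex \<Rightarrow> complex \<Rightarrow> complex" where
  "EE p y = (\<Sum>k. y^k / qpoch p p k)"

lemma EE_bound:
  fixes p y :: complex
  assumes p1: "norm p < 1"
  shows "\<exists>C\<ge>0. \<forall>k. norm (y^k / qpoch p p k) \<le> C * norm y ^ k"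
proof -
  obtain d where d: "d > 0" "\<And>n. norm (qpoch p p n) \<ge> d"
    using qpoch_pp_lower[OF p1] by blast
  have "norm (y^k / qpoch p p k) \<le> (1/d) * norm y ^ k" for k
  proof -
    have "norm (y^k / qpoch p p k) = norm y ^ k / norm (qpoch p p k)"
      by (simp add: norm_divide norm_power)
    also have "\<dots> \<le> norm y ^ k / d" using d qpoch_pp_nonzero[OF p1, of k] by (intro divide_left_mono) auto
    finally show ?thesis by simp
  qed
  then show ?thesis using d by (intro exI[of _ "1/d"]) auto
qed

lemma EE_summable:
  fixes p y :: complex
  assumes p1: "norm p < 1" and y1: "norm y < 1"
  shows "summable (\<lambda>k. y^k / qpoch p p k)"
proof -
  obtain C where "C \<ge> 0" "\<And>k. norm (y^k / qpoch p p k) \<le> C * norm y ^ k"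
    using EE_bound[OF p1, of y] by blast
  then show ?thesis by (intro geom_bound_summable[OF y1]) auto
qed

lemma EE_shift:
  fixes p y :: complex
  assumes p1: "norm p < 1" and y1: "norm y < 1"
  shows "EE p y * (1 - y) = EE p (p*y)"
proof -
  have py: "norm (p*y) < 1"
  proof -
    have "norm (p*y) = norm p * norm y" by (simp add: norm_mult)
    also have "\<dots> \<le> 1 * norm y" using p1 by (intro mult_right_mono) auto
    finally show ?thesis using y1 by simp
  qed
  define f where "f = (\<lambda>k. y^k / qpoch p p k - (p*y)^k / qpoch p p k)"
  have "f sums (EE p y - EE p (p*y))"
    unfolding f_def EE_def using EE_summable[OF p1 y1] EE_summable[OF p1 py]
    by (intro sums_diff summable_sums)
  moreover have "f sums (y * EE p y)"
  proof -
    have "(\<lambda>j. f (Suc j)) = (\<lambda>j. y * (y^j / qpoch p p j))"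
    proof
      fix j
      have n: "qpoch p p j \<noteq> 0" "1 - p * p^j \<noteq> 0"
        using qpoch_pp_nonzero[OF p1, of "Suc j"] by (auto simp: qpoch_Suc)
      have "f (Suc j) = (y^(Suc j) - (p*y)^(Suc j)) / (qpoch p p j * (1 - p*p^j))"
        by (simp add: f_def qpoch_Suc diff_divide_distrib)
      also have "y^(Suc j) - (p*y)^(Suc j) = (y * y^j) * (1 - p*p^j)"
        by (simp add: power_mult_distrib algebra_simps)
      finally show "f (Suc j) = y * (y^j / qpoch p p j)"
        using n by simp

    qed
    moreover have "(\<lambda>j. y * (y^j / qpoch p p j)) sums (y * EE p y)"
      unfolding EE_def using EE_summable[OF p1 y1] by (intro sums_mult summable_sums)
    ultimately have "(\<lambda>j. f (Suc j)) sums (y * EE p y)" by simp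
    then have "f sums (y * EE p y + f 0)" by (simp add: sums_Suc_iff)
    then show ?thesis by (simp add: f_def)
  qed
  ultimately have "EE p y - EE p (p*y) = y * EE p y" by (rule sums_unique2)
  then show ?thesis by (simp add: algebra_simps)
qed

lemma Euler:
  fixes p y :: complex
  assumes p1: "norm p < 1" and y1: "norm y < 1"
  shows "EE p y * qpoch_inf y p = 1"
proof -
  have pny: "norm (p^N * y) < 1" for N
  proof -
    have "norm (p^N * y) = norm p ^ N * norm y" by (simp add: norm_mult norm_power)
    also have "\<dots> \<le> 1 * norm y" using p1 by (intro mult_right_mono power_le_one) auto
    finally show ?thesis using y1 by simp
  qed
  have it: "EE p y * qpoch y p N = EE p (p^N * y)" for N
  proof (induction N)
    case 0 then show ?case by simp
  next
    case (Suc N)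
    have "EE p y * qpoch y p (Suc N) = EE p (p^N * y) * (1 - p^N * y)"
      using Suc by (simp add: qpoch_Suc mult_ac)
    also have "\<dots> = EE p (p * (p^N * y))" by (rule EE_shift[OF p1 pny])
    finally show ?case by (simp add: mult_ac)
  qed
  obtain C where C: "C \<ge> 0" "\<And>k. norm (y^k / qpoch p p k) \<le> C * norm y ^ k"
    using EE_bound[OF p1, of y] by blast
  have "(\<lambda>N. EE p (p^N * y)) \<longlonglongrightarrow> (\<Sum>k. (if k = 0 then 1 else 0::complex))"
  proof -
    have "eventually (\<lambda>n. summable (\<lambda>k. norm ((p^n*y)^k / qpoch p p k))) sequentially \<and>
        summable (\<lambda>n. norm (if n = 0 then 1 else 0::complex)) \<and>
        ((\<lambda>n. \<Sum>k. (p^n*y)^k / qpoch p p k) \<longlongrightarrow> (\<Sum>k. (if k = 0 then 1 else 0::complex))) sequentially"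
    proof (rule tannerys_theorem[where M = "\<lambda>k. C * norm y ^ k"])
      show "(\<lambda>n. (p^n*y)^k / qpoch p p k) \<longlonglongrightarrow> (if k = 0 then 1 else 0)" for k
      proof (cases "k = 0")
        case True then show ?thesis by simp
      next
        case False
        have "(\<lambda>n. (p^n*y)^k / qpoch p p k) \<longlonglongrightarrow> (0*y)^k / qpoch p p k"
          using p1 qpoch_pp_nonzero[OF p1, of k] by (intro tendsto_intros LIMSEQ_power_zero) auto
        then show ?thesis using False by (simp add: zero_power)
      qed
      show "\<forall>\<^sub>F (k, n) in sequentially \<times>\<^sub>F sequentially. norm ((p^n*y)^k / qpoch p p k) \<le> C * norm y ^ k"
      proof (intro always_eventually allI, clarify)
        fix k n
        have "norm ((p^n*y)^k / qpoch p p k) = norm (p^n) ^ k * norm (y^k / qpoch p p k)"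
          by (simp add: norm_mult norm_divide norm_power power_mult_distrib)
        also have "\<dots> \<le> 1 * (C * norm y ^ k)"
          using p1 C by (intro mult_mono power_le_one) (auto simp: norm_power intro!: power_le_one)
        finally show "norm ((p^n*y)^k / qpoch p p k) \<le> C * norm y ^ k" by simp
      qed
      show "summable (\<lambda>k. C * norm y ^ k)"
        using y1 by (intro summable_mult summable_geometric) simp
    qed simp
    then show ?thesis unfolding EE_def by blast
  qed
  moreover have "(\<Sum>k. (if k = 0 then 1 else 0::complex)) = 1"
    using sums_single[of 0 "\<lambda>_. 1::complex"] by (simp add: sums_iff)
  ultimately have l1: "(\<lambda>N. EE p y * qpoch y p N) \<longlonglongrightarrow> 1" unfolding it by simp
  have l2: "(\<lambda>N. EE p y * qpoch y p N) \<longlonglongrightarrow> EE p y * qpoch_inf y p"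
    by (intro tendsto_mult tendsto_const qpoch_tendsto p1)
  show ?thesis using LIMSEQ_unique[OF l2 l1] .
qed



lemma pascal_pt:
  fixes p :: complex
  assumes p1: "norm p < 1" and k: "k \<le> Suc N"
  shows "(1 - p^(Suc N)) / (qpoch p p k * qpoch p p (Suc N - k))
    = (if k \<le> N then p^k / (qpoch p p k * qpoch p p (N - k)) else 0)
      + (if k = 0 then 0 else 1 / (qpoch p p (k - 1) * qpoch p p (N - (k - 1))))"
proof -
  have nz: "\<And>n. qpoch p p n \<noteq> 0" by (rule qpoch_pp_nonzero[OF p1])
  have nf: "\<And>n. 1 - p * p^n \<noteq> 0" using nz by (metis qpoch_nonzero_factor)
  show ?thesis
  proof (cases "k = 0")
    have s: "qpoch p p (Suc N) = qpoch p p N * (1 - p^(Suc N))" by (simp add: qpoch_Suc)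
    have x: "1 - p^(Suc N) \<noteq> 0" using nf[of N] by simp
    case True then show ?thesis using nz[of N] x by (simp add: s)
  next
    case False
    show ?thesis
    proof (cases "k = Suc N")
      have s: "qpoch p p (Suc N) = qpoch p p N * (1 - p^(Suc N))" by (simp add: qpoch_Suc)
      have x: "1 - p^(Suc N) \<noteq> 0" using nf[of N] by simp
      case True then show ?thesis using nz[of N] x by (simp add: s)
    next
      case False': False
      obtain j where j: "k = Suc j" using \<open>k \<noteq> 0\<close> not0_implies_Suc by blast
      define r where "r = N - k"
      have jr: "k = Suc j" "N = Suc j + r" using j k False' unfolding r_def by auto
      have e1: "Suc N - k = Suc r" "N - k = r" "k - 1 = j" "N - (k - 1) = Suc r" using jr by auto
      define A where "A = qpoch p p j"
      define B where "B = qpoch p p r"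
      have AB: "A \<noteq> 0" "B \<noteq> 0" "1 - p*p^j \<noteq> 0" "1 - p*p^r \<noteq> 0" using nz nf by (auto simp: A_def B_def)
      have alg: "(1 - X*Y) / (A*(1 - X) * (B*(1-Y))) = X / (A*(1 - X) * B) + 1 / (A * (B*(1-Y)))"
        if "A \<noteq> 0" "B \<noteq> 0" "1 - X \<noteq> 0" "1 - Y \<noteq> 0" for X Y :: complex
      proof -
        define U where "U = 1 - X"
        define V where "V = 1 - Y"
        have XY: "X = 1 - U" "Y = 1 - V" unfolding U_def V_def by simp_all
        have "U \<noteq> 0" "V \<noteq> 0" using that unfolding U_def V_def by auto
        then have "(1 - (1-U)*(1-V)) / (A*U * (B*V)) = (1-U) / (A*U * B) + 1 / (A * (B*V))"
          using that(1,2) by (simp add: field_simps)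
        then show ?thesis unfolding XY by (simp add: U_def V_def)
      qed
      have pe: "p^(Suc N) = p*p^j * (p*p^r)" using jr by (simp add: power_add)
      have "(1 - p^(Suc N)) / (A*(1 - p*p^j) * (B*(1-p*p^r)))
          = p*p^j / (A*(1 - p*p^j) * B) + 1 / (A * (B*(1-p*p^r)))"
        unfolding pe by (rule alg[OF AB])
      then show ?thesis using jr e1 by (simp add: qpoch_Suc A_def B_def)
    qed
  qed
qed

lemma qbinom:
  fixes q z :: complex
  assumes q1: "norm q < 1"
  shows "(\<Sum>k\<le>N. (-1)^k * q^(k*(k-1)) * z^k / (qpoch (q^2) (q^2) k * qpoch (q^2) (q^2) (N-k)))
       = qpoch z (q^2) N / qpoch (q^2) (q^2) N"

proof (induction N arbitrary: z)
  case 0 then show ?case by simp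
next
  case (Suc N)
  define p where "p = q^2"
  have p1: "norm p < 1" unfolding p_def using q1 by (simp add: norm_power power_less_one_iff)
  have nz: "\<And>n. qpoch p p n \<noteq> 0" by (rule qpoch_pp_nonzero[OF p1])
  define t where "t = (\<lambda>k::nat. (-1)^k * q^(k*(k-1)))"
  have tS: "t (Suc j) = - (t j * p^j)" for j
  proof -
    have "Suc j * (Suc j - 1) = j * (j - 1) + 2 * j" by (cases j) auto
    then show ?thesis unfolding t_def p_def by (simp add: power_add power_mult power2_eq_square power_mult_distrib)
  qed
  define S where "S = (\<lambda>w. \<Sum>k\<le>N. t k * w^k / (qpoch p p k * qpoch p p (N-k)))"
  have IH: "S w = qpoch w p N / qpoch p p N" for w
    using Suc.IH[of w] unfolding S_def t_def p_def by simp
  have "(1 - p^(Suc N)) * (\<Sum>k\<le>Suc N. t k * z^k / (qpoch p p k * qpoch p p (Suc N - k)))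
      = (\<Sum>k\<le>Suc N. t k * z^k * ((1 - p^(Suc N)) / (qpoch p p k * qpoch p p (Suc N - k))))"
    unfolding sum_distrib_left by (intro sum.cong refl) (simp only: times_divide_eq_right times_divide_eq_left mult_ac)
  also have "\<dots> = (\<Sum>k\<le>Suc N. t k * z^k * (if k \<le> N then p^k / (qpoch p p k * qpoch p p (N - k)) else 0))
      + (\<Sum>k\<le>Suc N. t k * z^k * (if k = 0 then 0 else 1 / (qpoch p p (k - 1) * qpoch p p (N - (k - 1)))))"
    unfolding sum.distrib[symmetric]
  proof (intro sum.cong refl)
    fix k assume "k \<in> {..Suc N}"
    then have k: "k \<le> Suc N" by simp
    show "t k * z^k * ((1 - p^(Suc N)) / (qpoch p p k * qpoch p p (Suc N - k)))
      = t k * z^k * (if k \<le> N then p^k / (qpoch p p k * qpoch p p (N - k)) else 0)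
       + t k * z^k * (if k = 0 then 0 else 1 / (qpoch p p (k - 1) * qpoch p p (N - (k - 1))))"
      by (subst pascal_pt[OF p1 k]) (rule distrib_left)
  qed
  also have "(\<Sum>k\<le>Suc N. t k * z^k * (if k \<le> N then p^k / (qpoch p p k * qpoch p p (N - k)) else 0))
      = S (p*z)"
    unfolding S_def by (simp add: power_mult_distrib mult_ac)
  also have "(\<Sum>k\<le>Suc N. t k * z^k * (if k = 0 then 0 else 1 / (qpoch p p (k - 1) * qpoch p p (N - (k - 1)))))
      = (\<Sum>j\<le>N. t (Suc j) * z^(Suc j) / (qpoch p p j * qpoch p p (N - j)))"
    by (subst sum.atMost_Suc_shift) simp
  also have "\<dots> = - z * S (p*z)"
    unfolding S_def tS by (simp add: sum_distrib_left power_mult_distrib mult_ac)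
  also have "S (p*z) + - z * S (p*z) = (1 - z) * (qpoch (z*p) p N / qpoch p p N)"
    unfolding IH using nz[of N] by (simp add: field_simps mult.commute)
  finally have "(1 - p^(Suc N)) * (\<Sum>k\<le>Suc N. t k * z^k / (qpoch p p k * qpoch p p (Suc N - k)))
      = (1 - z) * (qpoch (z*p) p N / qpoch p p N)" .
  moreover have "qpoch z p (Suc N) / qpoch p p (Suc N) * (1 - p^(Suc N)) = (1 - z) * (qpoch (z*p) p N / qpoch p p N)"
  proof -
    have h1: "qpoch z p (Suc N) = (1-z) * qpoch (z*p) p N" by (rule qpoch_Suc')
    have h2: "qpoch p p (Suc N) = qpoch p p N * (1 - p^(Suc N))" by (simp add: qpoch_Suc)
    have h3: "1 - p^(Suc N) \<noteq> 0" using qpoch_nonzero_factor[OF nz, of N] by simp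
    show ?thesis unfolding h1 h2 using nz[of N] h3 by simp
  qed
  moreover have "1 - p^(Suc N) \<noteq> 0" using qpoch_nonzero_factor[OF nz, of N] by simp
  ultimately have "(\<Sum>k\<le>Suc N. t k * z^k / (qpoch p p k * qpoch p p (Suc N - k))) = qpoch z p (Suc N) / qpoch p p (Suc N)"
    by (metis (no_types, lifting) mult.commute mult_left_cancel)
  then show ?case unfolding t_def p_def by simp
qed




lemma fold_sum:
  fixes h :: "nat \<Rightarrow> complex"
  shows "(\<Sum>k\<le>2*n. h k) = (\<Sum>m\<le>n. if m = 0 then h n else h (n+m) + h (n-m))"
proof (induction n arbitrary: h)
  case 0 then show ?case by simp
next
  case (Suc n)
  have "(\<Sum>k\<le>2*Suc n. h k) = h 0 + (\<Sum>k\<le>2*n. h (Suc k)) + h (2*n+2)"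
  proof -
    have "2*Suc n = Suc (Suc (2*n))" by simp
    then have "(\<Sum>k\<le>2*Suc n. h k) = (\<Sum>k\<le>Suc (2*n). h k) + h (2*n+2)" by simp
    also have "(\<Sum>k\<le>Suc (2*n). h k) = h 0 + (\<Sum>k\<le>2*n. h (Suc k))" by (rule sum.atMost_Suc_shift)
    finally show ?thesis .
  qed
  also have "(\<Sum>k\<le>2*n. h (Suc k)) = (\<Sum>m\<le>n. if m = 0 then h (Suc n) else h (Suc (n+m)) + h (Suc (n-m)))"
    using Suc.IH[of "\<lambda>k. h (Suc k)"] by simp
  also have "\<dots> = (\<Sum>m\<le>n. if m = 0 then h (Suc n) else h (Suc n+m) + h (Suc n-m))"
    by (intro sum.cong refl) (auto simp: Suc_diff_le)
  finally show ?case by (simp add: algebra_simps mult_2_right)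
qed

lemma sqpow: "((q::complex)^2)^k = q^k * q^k"
  by (simp add: power2_eq_square power_mult_distrib)

lemma dblpow: "(q::complex)^(2*k) = q^k * q^k"
  by (simp add: mult_2 power_add)

lemma prod_shift_id:
  fixes q :: complex
  assumes q0: "q \<noteq> 0"
  shows "qpoch (q/q^(2*n)) (q^2) (2*n) * q^(n^2) = (-1)^n * (qpoch q (q^2) n)^2"
proof (induction n)
  case 0 then show ?case by simp
next
  case (Suc n)
  define x where "x = q/q^(2*n)"
  have h1: "q/q^(2*Suc n) = x / q^2" unfolding x_def by (simp add: power_add field_simps q0 power2_eq_square)
  have "qpoch (x/q^2) (q^2) (2*Suc n) = (1 - x/q^2) * qpoch x (q^2) (2*n + 1)"
  proof -
    have "2*Suc n = Suc (2*n+1)" by simp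
    then show ?thesis using q0 by (simp only: qpoch_Suc') simp
  qed
  also have "qpoch x (q^2) (2*n + 1) = qpoch x (q^2) (2*n) * (1 - q^(2*n+1))"
  proof -
    have "x * (q^2)^(2*n) = q^(2*n+1)" unfolding x_def sqpow using q0 by simp
    then show ?thesis by (simp add: qpoch_Suc)
  qed
  finally have e: "qpoch (q/q^(2*Suc n)) (q^2) (2*Suc n) = (1 - x/q^2) * qpoch x (q^2) (2*n) * (1 - q^(2*n+1))"
    unfolding h1 by simp
  have sq: "q^((Suc n)^2) = q^(n^2) * q^(2*n+1)"
  proof -
    have "(Suc n)^2 = n^2 + (2*n+1)" by (simp add: power2_eq_square)
    then show ?thesis by (simp only: power_add)
  qed
  have xq: "(1 - x/q^2) * q^(2*n+1) = -(1 - q^(2*n+1))"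
    unfolding x_def using q0 by (simp add: field_simps power_add power2_eq_square)
  have "qpoch (q/q^(2*Suc n)) (q^2) (2*Suc n) * q^((Suc n)^2)
     = (qpoch x (q^2) (2*n) * q^(n^2)) * ((1 - x/q^2) * q^(2*n+1)) * (1 - q^(2*n+1))"
    unfolding e sq by (simp add: mult_ac)
  also have "\<dots> = (-1)^n * (qpoch q (q^2) n)^2 * (-(1 - q^(2*n+1))) * (1 - q^(2*n+1))"
    unfolding xq using Suc.IH x_def by simp
  also have "\<dots> = (-1)^(Suc n) * (qpoch q (q^2) (Suc n))^2"
    using dblpow[of q n] by (simp add: qpoch_Suc power_mult[symmetric] power2_eq_square algebra_simps)
  finally show ?case .
qed

lemma prod_even_odd:
  fixes q :: complex
  shows "qpoch (-q) q (2*n) * qpoch (q^2) (q^2) n * qpoch q (q^2) n = qpoch (q^2) (q^2) (2*n)"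
proof (induction n)
  case 0 then show ?case by simp
next
  case (Suc n)
  define r where "r = q^n"
  have two: "2*Suc n = Suc (Suc (2*n))" by simp
  have a: "qpoch (-q) q (2*Suc n) = qpoch (-q) q (2*n) * (1 + q*(r*r)) * (1 + q*(q*(r*r)))"
    unfolding two r_def by (simp only: qpoch_Suc dblpow power_Suc) simp
  have b: "qpoch (q^2) (q^2) (2*Suc n) = qpoch (q^2) (q^2) (2*n) * (1 - q^2*(r*r*(r*r))) * (1 - q^2*(q^2*(r*r*(r*r))))"
    unfolding two r_def by (simp only: qpoch_Suc sqpow dblpow power_Suc)
  have c: "qpoch (q^2) (q^2) (Suc n) = qpoch (q^2) (q^2) n * (1 - q^2*(r*r))"
    unfolding r_def by (simp only: qpoch_Suc sqpow)
  have d: "qpoch q (q^2) (Suc n) = qpoch q (q^2) n * (1 - q*(r*r))"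
    unfolding r_def by (simp only: qpoch_Suc sqpow)
  have e: "(1 + q*(r*r)) * (1 + q*(q*(r*r))) * (1 - q^2*(r*r)) * (1 - q*(r*r))
     = (1 - q^2*(r*r*(r*r))) * (1 - q^2*(q^2*(r*r*(r*r))))"
    by (simp add: algebra_simps power2_eq_square)
  have "qpoch (-q) q (2*Suc n) * qpoch (q^2) (q^2) (Suc n) * qpoch q (q^2) (Suc n)
     = (qpoch (-q) q (2*n) * qpoch (q^2) (q^2) n * qpoch q (q^2) n)
       * ((1 + q*(r*r)) * (1 + q*(q*(r*r))) * (1 - q^2*(r*r)) * (1 - q*(r*r)))"
    unfolding a c d by (simp only: mult_ac)
  also have "\<dots> = qpoch (q^2) (q^2) (2*Suc n)"
    unfolding Suc.IH e b by (simp only: mult_ac)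
  finally show ?case .
qed



definition cc :: "complex \<Rightarrow> nat \<Rightarrow> complex" where
  "cc q m = (if m = 0 then 1 else 2) * (-1)^m * q^(m^2)"

lemma exp_id:
  fixes q :: complex
  assumes q0: "q \<noteq> 0" and e: "k*k + n*n = m*m + 2*n*k" and ev: "even (k + n + m)"
  shows "(-1)^k * q^(k*(k-1)) * (q/q^(2*n))^k * q^(n^2) = (-1)^(n+m) * q^(m^2)"
proof -
  have s1: "(-1::complex)^k = (-1)^(n+m)"
    using ev apply (simp add: minus_one_power_iff) by blast
  have s2: "q^(k*(k-1)) * q^k = q^(k*k)"
  proof -
    have "k*(k-1) + k = k*k" by (cases k) auto
    then show ?thesis by (metis power_add)
  qed
  have s3: "q^(k*k) * q^(n*n) = q^(m*m) * (q^(2*n))^k"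
    by (metis e power_add power_mult)
  have "(-1)^k * q^(k*(k-1)) * (q/q^(2*n))^k * q^(n^2)
      = (-1)^(n+m) * ((q^(k*(k-1)) * q^k) * q^(n*n)) / (q^(2*n))^k"
    by (simp add: s1 power_divide power2_eq_square)
  also have "\<dots> = (-1)^(n+m) * q^(m^2)"
    unfolding s2 s3 using q0 by (simp add: power2_eq_square)
  finally show ?thesis .
qed

lemma beta_id:
  fixes q :: complex
  assumes q1: "norm q < 1" and q0: "q \<noteq> 0"
  shows "qpoch q (q^2) n / (qpoch (-q) q (2*n) * qpoch (q^2) (q^2) n)
     = (\<Sum>m\<le>n. cc q m / (qpoch (q^2) (q^2) (n-m) * qpoch (q^2) (q^2) (n+m)))"
proof -
  define p where "p = q^2"
  have p1: "norm p < 1" unfolding p_def using q1 by (simp add: norm_power power_less_one_iff)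
  define P where "P = qpoch p p"
  have Pnz: "P k \<noteq> 0" for k unfolding P_def by (rule qpoch_pp_nonzero[OF p1])
  define z where "z = q/q^(2*n)"
  define h where "h = (\<lambda>k. (-1)^k * q^(k*(k-1)) * z^k / (P k * P (2*n-k)))"
  have qb: "(\<Sum>k\<le>2*n. h k) = qpoch z p (2*n) / P (2*n)"
    using qbinom[OF q1, where N="2*n" and z=z] unfolding h_def P_def p_def .
  have hq: "h k * q^(n^2) = (-1)^(n+m) * q^(m^2) / (P (n-m) * P (n+m))"
    if "m \<le> n" "k = n+m \<or> k = n-m" for k m
  proof -
    have nk: "k = n+m \<or> n = k+m" using that by auto
    have e: "k*k + n*n = m*m + 2*n*k" using nk by (auto simp: algebra_simps)
    have ev: "even (k + n + m)" using nk by auto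
    have d: "P k * P (2*n-k) = P (n-m) * P (n+m)"
    proof (cases "k = n+m")
      case True
      then have "2*n-k = n-m" by simp
      then show ?thesis using True by (simp only: mult.commute)
    next
      case False
      then have k: "k = n-m" using that by auto
      then have "2*n-k = n+m" using that by simp
      then show ?thesis using k by simp
    qed
    have "h k * q^(n^2) = ((-1)^k * q^(k*(k-1)) * z^k * q^(n^2)) / (P k * P (2*n-k))"
      unfolding h_def by simp
    also have "\<dots> = (-1)^(n+m) * q^(m^2) / (P (n-m) * P (n+m))"
      unfolding d z_def exp_id[OF q0 e ev] ..
    finally show ?thesis .
  qed
  have "(\<Sum>k\<le>2*n. h k) * q^(n^2) = (\<Sum>m\<le>n. (if m = 0 then h n else h (n+m) + h (n-m)) * q^(n^2))"
    unfolding fold_sum sum_distrib_right ..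
  also have "\<dots> = (\<Sum>m\<le>n. (-1)^n * (cc q m / (P (n-m) * P (n+m))))"
  proof (intro sum.cong refl)
    fix m assume "m \<in> {..n}"
    then have m: "m \<le> n" by simp
    show "(if m = 0 then h n else h (n+m) + h (n-m)) * q^(n^2) = (-1)^n * (cc q m / (P (n-m) * P (n+m)))"
    proof (cases "m = 0")
      case True
      then show ?thesis using hq[of 0 n] by (simp add: cc_def)
    next
      case False
      have "(h (n+m) + h (n-m)) * q^(n^2) = h (n+m) * q^(n^2) + h (n-m) * q^(n^2)"
        by (simp add: algebra_simps)
      also have "\<dots> = 2 * ((-1)^(n+m) * q^(m^2) / (P (n-m) * P (n+m)))"
        using hq[OF m] by simp
      also have "\<dots> = (-1)^n * (cc q m / (P (n-m) * P (n+m)))"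
        using False by (simp add: cc_def power_add)
      finally show ?thesis using False by simp
    qed
  qed
  also have "\<dots> = (-1)^n * (\<Sum>m\<le>n. cc q m / (P (n-m) * P (n+m)))"
    by (simp add: sum_distrib_left)
  finally have A: "(-1)^n * (\<Sum>m\<le>n. cc q m / (P (n-m) * P (n+m))) = qpoch z p (2*n) * q^(n^2) / P (2*n)"
    unfolding qb by simp
  have B: "qpoch z p (2*n) * q^(n^2) = (-1)^n * (qpoch q p n)^2"
    unfolding z_def p_def by (rule prod_shift_id[OF q0])
  have C: "qpoch (-q) q (2*n) * P n * qpoch q p n = P (2*n)"
    unfolding P_def p_def by (rule prod_even_odd)
  have Cnz: "qpoch (-q) q (2*n) \<noteq> 0" using C Pnz[of "2*n"] by auto
  have "(\<Sum>m\<le>n. cc q m / (P (n-m) * P (n+m))) = (qpoch q p n)^2 / P (2*n)"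
  proof -
    have "(-1)^n * (\<Sum>m\<le>n. cc q m / (P (n-m) * P (n+m))) = (-1)^n * ((qpoch q p n)^2 / P (2*n))"
      using A unfolding B by simp
    then have "(-1)^n * ((-1)^n * (\<Sum>m\<le>n. cc q m / (P (n-m) * P (n+m))))
       = (-1)^n * ((-1)^n * ((qpoch q p n)^2 / P (2*n)))" by simp
    then show ?thesis by (simp only: left_minus_one_mult_self)
  qed
  also have "\<dots> = qpoch q p n / (qpoch (-q) q (2*n) * P n)"
    unfolding C[symmetric] using Cnz Pnz[of n] by (simp add: power2_eq_square)
  finally show ?thesis unfolding P_def p_def ..
qed



lemma cc_norm_le:
  fixes q :: complex
  assumes "norm q < 1"
  shows "norm (cc q m) \<le> 2"
proof -
  have "norm (cc q m) = (if m = 0 then 1 else 2) * norm q ^ (m^2)"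
    by (simp add: cc_def norm_mult norm_power)
  also have "\<dots> \<le> 2 * 1"
    using assms by (intro mult_mono power_le_one) auto
  finally show ?thesis by simp
qed

lemma tri_sum:
  fixes g :: "nat \<Rightarrow> nat \<Rightarrow> complex"
  shows "(\<Sum>n<N. \<Sum>m\<le>n. g m (n-m)) = (\<Sum>m<N. \<Sum>k<N-m. g m k)"
proof (induction N)
  case 0 then show ?case by simp
next
  case (Suc N)
  have "(\<Sum>m<Suc N. \<Sum>k<Suc N-m. g m k) = (\<Sum>m<N. \<Sum>k<Suc N-m. g m k) + g N 0"
    by simp
  also have "(\<Sum>m<N. \<Sum>k<Suc N-m. g m k) = (\<Sum>m<N. (\<Sum>k<N-m. g m k) + g m (N-m))"
  proof (intro sum.cong refl)
    fix m assume "m \<in> {..<N}"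
    then have "Suc N - m = Suc (N - m)" by auto
    then show "(\<Sum>k<Suc N-m. g m k) = (\<Sum>k<N-m. g m k) + g m (N-m)" by simp
  qed
  also have "\<dots> = (\<Sum>m<N. \<Sum>k<N-m. g m k) + (\<Sum>m<N. g m (N-m))"
    by (rule sum.distrib)
  finally show ?case using Suc.IH by (simp add: lessThan_Suc_atMost[symmetric])
qed

lemma TT_split:
  fixes p a c :: complex
  shows "qpoch (p/a) p (m+k) * qpoch (p/c) p (m+k) * (a*c/p)^(m+k) / (qpoch p p k * qpoch p p (k + 2*m))
    = (qpoch (p/a) p m * qpoch (p/c) p m * (a*c/p)^m) * TT p a c m k"
proof -
  have e: "p/a * p^m = p^(m+1)/a" "p/c * p^m = p^(m+1)/c" by (simp_all add: power_add mult_ac)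
  show ?thesis unfolding TT_def qpoch_add e by (simp add: power_add mult_ac)
qed

lemma rhs_sums:
  fixes q a c :: complex
  defines "p \<equiv> q^2"
  assumes q1: "norm q < 1" and q0: "q \<noteq> 0" and a0: "a \<noteq> 0" and c0: "c \<noteq> 0"
    and y1: "norm (a*c/p) < 1"
  shows "(\<lambda>n. qpoch (p/a) p n * qpoch (p/c) p n * (a*c/p)^n
              * (\<Sum>m\<le>n. cc q m / (qpoch p p (n-m) * qpoch p p (n+m))))
     sums (\<Sum>m. cc q m * (qpoch (p/a) p m * qpoch (p/c) p m * (a*c/p)^m) * II p a c m)"
proof -
  have p1: "norm p < 1" unfolding p_def using q1 by (simp add: norm_power power_less_one_iff)
  define y where "y = a*c/p"
  define V where "V = (\<lambda>m. qpoch (p/a) p m * qpoch (p/c) p m * y^m)"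
  define g where "g = (\<lambda>m k. cc q m * V m * TT p a c m k)"
  have Rg: "qpoch (p/a) p n * qpoch (p/c) p n * y^n * (\<Sum>m\<le>n. cc q m / (qpoch p p (n-m) * qpoch p p (n+m)))
      = (\<Sum>m\<le>n. g m (n-m))" for n
    unfolding sum_distrib_left
  proof (intro sum.cong refl)
    fix m assume "m \<in> {..n}"
    then have m: "m \<le> n" by simp
    then obtain k where k: "n = m + k" using le_Suc_ex by blast
    have nk: "n - m = k" "n + m = k + 2*m" using k by auto
    define D where "D = qpoch p p k * qpoch p p (k + 2*m)"
    define X where "X = qpoch (p/a) p (m+k) * qpoch (p/c) p (m+k) * y^(m+k)"
    have XD: "X / D = V m * TT p a c m k"
      unfolding X_def D_def V_def y_def by (rule TT_split)
    have "X * (cc q m / D) = cc q m * (X / D)" by simp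
    then show "qpoch (p/a) p n * qpoch (p/c) p n * y^n * (cc q m / (qpoch p p (n-m) * qpoch p p (n+m)))
        = g m (n-m)"
      unfolding g_def nk XD using k by (simp add: X_def D_def mult.assoc)
  qed
  obtain C where C: "C \<ge> 0" "\<And>m k. norm (TT p a c m k) \<le> C * norm y ^ k"
    using TT_bound[OF p1, of a c] unfolding y_def by blast
  define E1 where "E1 = exp (norm (p/a) / (1 - norm p))"
  define E2 where "E2 = exp (norm (p/c) / (1 - norm p))"
  have V_le: "norm (V m) \<le> E1 * E2 * norm y ^ m" for m
  proof -
    have "norm (V m) = norm (qpoch (p/a) p m) * norm (qpoch (p/c) p m) * norm y ^ m"
      by (simp add: V_def norm_mult norm_power)
    also have "\<dots> \<le> E1 * E2 * norm y ^ m"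
      unfolding E1_def E2_def by (intro mult_mono qpoch_norm_le p1) auto
    finally show ?thesis .
  qed
  define B where "B = 2 * (E1 * E2) * (C / (1 - norm y))"
  have Bnn: "B \<ge> 0" unfolding B_def E1_def E2_def using C y1 y_def by auto
  have partial_le: "norm (\<Sum>k<L. g m k) \<le> B * norm y ^ m" for m L
  proof -
    have "norm (\<Sum>k<L. g m k) = norm (cc q m * V m) * norm (\<Sum>k<L. TT p a c m k)"
      unfolding g_def by (simp add: sum_distrib_left[symmetric] norm_mult mult.assoc)
    also have "norm (\<Sum>k<L. TT p a c m k) \<le> C / (1 - norm y)"
    proof -
      have "norm (\<Sum>k<L. TT p a c m k) \<le> (\<Sum>k<L. C * norm y ^ k)"
        using C by (intro sum_norm_le) auto
      also have "\<dots> \<le> (\<Sum>k. C * norm y ^ k)"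
        using C y1 y_def by (intro sum_le_suminf summable_mult summable_geometric) auto
      also have "\<dots> = C / (1 - norm y)"
      proof -
        have ny: "norm (norm y) < 1" using y1 y_def by simp
        have "(\<lambda>k. C * norm y ^ k) sums (C * (1 / (1 - norm y)))"
          by (intro sums_mult geometric_sums ny)
        then show ?thesis by (simp add: sums_iff)
      qed
      finally show ?thesis .
    qed
    then have "norm (cc q m * V m) * norm (\<Sum>k<L. TT p a c m k) \<le> norm (cc q m * V m) * (C / (1 - norm y))"
      by (intro mult_left_mono) auto
    also have "norm (cc q m * V m) \<le> 2 * (E1 * E2 * norm y ^ m)"
      unfolding norm_mult by (intro mult_mono cc_norm_le q1 V_le) auto
    then have "norm (cc q m * V m) * (C / (1 - norm y)) \<le> 2 * (E1 * E2 * norm y ^ m) * (C / (1 - norm y))"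
      using C y1 y_def by (intro mult_right_mono) auto
    finally show ?thesis unfolding B_def by (simp add: mult_ac)
  qed
  define hN where "hN = (\<lambda>N m. if m \<in> {..<N} then (\<Sum>k<N-m. g m k) else 0)"
  have hsum: "(\<Sum>m. hN N m) = (\<Sum>m<N. \<Sum>k<N-m. g m k)" for N
    unfolding hN_def by (rule sums_unique[symmetric], rule sums_If_finite_set) simp
  have gsum: "(\<lambda>k. g m k) sums (cc q m * V m * II p a c m)" for m
    unfolding g_def II_def using TT_summable[OF p1, of a c] y1 y_def
    by (intro sums_mult summable_sums) auto
  have "eventually (\<lambda>N. summable (\<lambda>m. norm (hN N m))) sequentially \<and>
        summable (\<lambda>m. norm (cc q m * V m * II p a c m)) \<and>
        ((\<lambda>N. \<Sum>m. hN N m) \<longlongrightarrow> (\<Sum>m. cc q m * V m * II p a c m)) sequentially"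
  proof (rule tannerys_theorem[where M = "\<lambda>m. B * norm y ^ m"])
    show "(\<lambda>N. hN N m) \<longlonglongrightarrow> cc q m * V m * II p a c m" for m
    proof -
      have "(\<lambda>N. \<Sum>k<N-m. g m k) \<longlonglongrightarrow> cc q m * V m * II p a c m"
        using filterlim_compose[OF summable_LIMSEQ[OF sums_summable[OF gsum]] filterlim_minus_const_nat_at_top[of m]]
          sums_unique[OF gsum[of m]] by (simp add: o_def)
      moreover have "eventually (\<lambda>N. (\<Sum>k<N-m. g m k) = hN N m) sequentially"
        unfolding hN_def eventually_sequentially by (intro exI[of _ "Suc m"]) auto
      ultimately show ?thesis by (rule Lim_transform_eventually)
    qed
    show "\<forall>\<^sub>F (m, N) in sequentially \<times>\<^sub>F sequentially. norm (hN N m) \<le> B * norm y ^ m"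
      using partial_le Bnn unfolding hN_def by (intro always_eventually) auto
    show "summable (\<lambda>m. B * norm y ^ m)"
      using y1 y_def by (intro summable_mult summable_geometric) auto
  qed simp
  then have "(\<lambda>N. \<Sum>m<N. \<Sum>k<N-m. g m k) \<longlonglongrightarrow> (\<Sum>m. cc q m * V m * II p a c m)"
    unfolding hsum by blast
  then have "(\<lambda>N. \<Sum>n<N. \<Sum>m\<le>n. g m (n-m)) \<longlonglongrightarrow> (\<Sum>m. cc q m * V m * II p a c m)"
    unfolding tri_sum .
  then show ?thesis unfolding sums_def Rg[unfolded y_def] V_def y_def by simp
qed



definition tt :: "complex \<Rightarrow> complex \<Rightarrow> complex \<Rightarrow> nat \<Rightarrow> complex" where
  "tt p a c n = qpoch (p/a) p n * qpoch (p/c) p n / (qpoch (p*a) p n * qpoch (p*c) p n)"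

definition DD :: "complex \<Rightarrow> complex \<Rightarrow> complex \<Rightarrow> nat \<Rightarrow> complex" where
  "DD p a c m = tt p a c m * (a*c/p)^m * (1 - a*p^m) * (1 - c*p^m) / (1 - a*c/p)"

lemma DD_diff:
  fixes p a c :: complex
  assumes p0: "p \<noteq> 0" and a0: "a \<noteq> 0" and c0: "c \<noteq> 0"
    and adef: "\<And>n. qpoch (p*a) p n \<noteq> 0" and cdef: "\<And>n. qpoch (p*c) p n \<noteq> 0"
    and y1: "a*c/p \<noteq> 1"
  shows "DD p a c n - DD p a c (Suc n) = (1 - p^(2*n+1)) * tt p a c n * (a*c/p)^n"
proof -
  define x where "x = p^n"
  define y where "y = a*c/p"
  define A where "A = qpoch (p/a) p n"
  define B where "B = qpoch (p/c) p n"
  define Ca where "Ca = qpoch (p*a) p n"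
  define Cc where "Cc = qpoch (p*c) p n"
  define Y where "Y = y^n"
  define u1 where "u1 = 1 - p*a*x"
  define u2 where "u2 = 1 - p*c*x"
  define w where "w = 1 - y"
  have nz: "Ca \<noteq> 0" "Cc \<noteq> 0" "u1 \<noteq> 0" "u2 \<noteq> 0" "w \<noteq> 0"
    using adef cdef qpoch_nonzero_factor[OF adef] qpoch_nonzero_factor[OF cdef] y1
    unfolding Ca_def Cc_def u1_def u2_def x_def w_def y_def by auto
  have t0: "tt p a c n = A*B/(Ca*Cc)" unfolding tt_def A_def B_def Ca_def Cc_def ..
  have t1: "tt p a c (Suc n) = A*(1 - p*x/a)*(B*(1 - p*x/c))/(Ca*u1*(Cc*u2))"
    unfolding tt_def A_def B_def Ca_def Cc_def u1_def u2_def x_def by (simp add: qpoch_Suc)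
  have d0: "DD p a c n = A*B/(Ca*Cc) * Y * (1 - a*x) * (1 - c*x) / w"
    unfolding DD_def t0 Y_def y_def x_def w_def ..
  have d1: "DD p a c (Suc n) = A*(1 - p*x/a)*(B*(1 - p*x/c))/(Ca*u1*(Cc*u2)) * (Y*y) * u1 * u2 / w"
    unfolding DD_def t1 Y_def y_def x_def w_def u1_def u2_def by (simp add: mult_ac)
  have d1': "DD p a c (Suc n) = A*B/(Ca*Cc) * Y * (y*(1 - p*x/a)*(1 - p*x/c)) / w"
    unfolding d1 using nz a0 c0 by (simp add: field_simps)
  have key: "(1 - a*x) * (1 - c*x) - y*(1 - p*x/a)*(1 - p*x/c) = w * (1 - p*x*x)"
    unfolding w_def y_def using p0 a0 c0 by (simp add: field_simps)
  have "DD p a c n - DD p a c (Suc n) = A*B/(Ca*Cc) * Y * ((1 - a*x) * (1 - c*x) - y*(1 - p*x/a)*(1 - p*x/c)) / w"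
  proof -
    have g: "Z*U1*U2/w' - Z*V/w' = Z*(U1*U2 - V)/w'" for Z U1 U2 V w' :: complex
      by (simp add: diff_divide_distrib algebra_simps)
    show ?thesis unfolding d0 d1' by (rule g)
  qed
  also have "\<dots> = A*B/(Ca*Cc) * Y * (1 - p*x*x)"
    unfolding key using nz by simp
  also have "\<dots> = (1 - p^(2*n+1)) * tt p a c n * (a*c/p)^n"
  proof -
    have "p^(2*n+1) = p*x*x" unfolding x_def by (simp add: power_add mult_2)
    then show ?thesis unfolding t0 Y_def y_def by (simp only: mult_ac)
  qed
  finally show ?thesis .
qed

lemma lhs_partial:
  fixes f e DD :: "nat \<Rightarrow> complex"
  assumes "\<And>n. DD n - DD (Suc n) = e n"
  shows "(\<Sum>n<N. (\<Sum>m\<le>n. f m) * e n) = (\<Sum>m<N. f m * (DD m - DD N))"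
proof (induction N)
  case 0 then show ?case by simp
next
  case (Suc N)
  have "(\<Sum>m<Suc N. f m * (DD m - DD (Suc N)))
      = (\<Sum>m<Suc N. f m * (DD m - DD N)) + (\<Sum>m<Suc N. f m) * e N"
  proof -
    have "(\<Sum>m<Suc N. f m * (DD m - DD (Suc N))) = (\<Sum>m<Suc N. f m * (DD m - DD N) + f m * e N)"
      by (intro sum.cong refl) (simp add: assms[of N, symmetric] algebra_simps)
    then show ?thesis by (simp only: sum.distrib sum_distrib_right)
  qed
  also have "(\<Sum>m<Suc N. f m * (DD m - DD N)) = (\<Sum>m<N. f m * (DD m - DD N))" by simp
  finally have X: "(\<Sum>m<Suc N. f m * (DD m - DD (Suc N))) = (\<Sum>m<N. f m * (DD m - DD N)) + (\<Sum>m<Suc N. f m) * e N" .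
  have "(\<Sum>n<Suc N. (\<Sum>m\<le>n. f m) * e n) = (\<Sum>n<N. (\<Sum>m\<le>n. f m) * e n) + (\<Sum>m\<le>N. f m) * e N"
    by simp
  also have "(\<Sum>m\<le>N. f m) = (\<Sum>m<Suc N. f m)" by (simp only: lessThan_Suc_atMost)
  finally show ?case unfolding X Suc.IH .
qed

lemma cc_summable:
  fixes q :: complex
  assumes q1: "norm q < 1"
  shows "summable (cc q)"
proof (rule summable_comparison_test[where g="\<lambda>m. 2 * norm q ^ m"])
  show "\<exists>N. \<forall>n\<ge>N. norm (cc q n) \<le> 2 * norm q ^ n"
  proof (intro exI allI impI)
    fix n :: nat
    have "norm (cc q n) = (if n = 0 then 1 else 2) * norm q ^ (n^2)"
      by (simp add: cc_def norm_mult norm_power)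
    also have "\<dots> \<le> 2 * norm q ^ n"
      using q1 by (intro mult_mono power_decreasing) (auto simp: power2_eq_square)
    finally show "norm (cc q n) \<le> 2 * norm q ^ n" .
  qed
  show "summable (\<lambda>m. 2 * norm q ^ m)" using q1 by (intro summable_mult summable_geometric) simp
qed

lemma DD_bound:
  fixes p a c :: complex
  assumes p1: "norm p < 1" and adef: "\<And>n. qpoch (p*a) p n \<noteq> 0" and cdef: "\<And>n. qpoch (p*c) p n \<noteq> 0"
  shows "\<exists>K\<ge>0. \<forall>m. norm (DD p a c m) \<le> K * norm (a*c/p) ^ m"
proof -
  obtain da where da: "da > 0" "\<And>n. norm (qpoch (p*a) p n) \<ge> da" using qpoch_lower[OF p1 adef] by blast
  obtain dc where dc: "dc > 0" "\<And>n. norm (qpoch (p*c) p n) \<ge> dc" using qpoch_lower[OF p1 cdef] by blast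
  define E1 where "E1 = exp (norm (p/a) / (1 - norm p))"
  define E2 where "E2 = exp (norm (p/c) / (1 - norm p))"
  define K where "K = E1 * E2 / (da * dc) * ((1 + norm a) * (1 + norm c)) / norm (1 - a*c/p)"
  have "K \<ge> 0" unfolding K_def E1_def E2_def using da dc by simp
  moreover have "norm (DD p a c m) \<le> K * norm (a*c/p) ^ m" for m
  proof -
    have t: "norm (tt p a c m) \<le> E1 * E2 / (da * dc)"
    proof -
      have "norm (tt p a c m) = norm (qpoch (p/a) p m) * norm (qpoch (p/c) p m)
           / (norm (qpoch (p*a) p m) * norm (qpoch (p*c) p m))"
        by (simp add: tt_def norm_mult norm_divide)
      also have "\<dots> \<le> E1 * E2 / (da * dc)"
        unfolding E1_def E2_def using da dc
        by (intro frac_le mult_mono qpoch_norm_le p1 mult_pos_pos) auto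
      finally show ?thesis .
    qed
    have pa: "norm (1 - a*p^m) \<le> 1 + norm a"
    proof -
      have "norm (1 - a*p^m) \<le> norm (1::complex) + norm (a*p^m)" by (rule norm_triangle_ineq4)
      also have "norm (a*p^m) \<le> norm a * 1"
        unfolding norm_mult norm_power using p1 by (intro mult_left_mono power_le_one) auto
      finally show ?thesis by simp
    qed
    have pc: "norm (1 - c*p^m) \<le> 1 + norm c"
    proof -
      have "norm (1 - c*p^m) \<le> norm (1::complex) + norm (c*p^m)" by (rule norm_triangle_ineq4)
      also have "norm (c*p^m) \<le> norm c * 1"
        unfolding norm_mult norm_power using p1 by (intro mult_left_mono power_le_one) auto
      finally show ?thesis by simp
    qed
    have "norm (DD p a c m) = norm (tt p a c m) * norm (a*c/p) ^ m * norm (1 - a*p^m) * norm (1 - c*p^m)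
        / norm (1 - a*c/p)"
      by (simp add: DD_def norm_mult norm_divide norm_power)
    also have "\<dots> \<le> E1 * E2 / (da * dc) * norm (a*c/p) ^ m * (1 + norm a) * (1 + norm c) / norm (1 - a*c/p)"
      using t pa pc da dc by (intro divide_right_mono mult_mono) (auto simp: E1_def E2_def)
    also have "\<dots> = K * norm (a*c/p) ^ m" unfolding K_def by (simp add: field_simps)
    finally show ?thesis .
  qed
  ultimately show ?thesis by blast
qed

lemma lhs_sums:
  fixes q a c :: complex
  defines "p \<equiv> q^2"
  assumes q1: "norm q < 1" and q0: "q \<noteq> 0" and a0: "a \<noteq> 0" and c0: "c \<noteq> 0"
    and adef: "\<And>n. qpoch (p*a) p n \<noteq> 0" and cdef: "\<And>n. qpoch (p*c) p n \<noteq> 0"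
    and y1: "norm (a*c/p) < 1"
  shows "(\<lambda>n. (\<Sum>m\<le>n. cc q m) * ((1 - p^(2*n+1)) * tt p a c n * (a*c/p)^n))
     sums (\<Sum>m. cc q m * DD p a c m)"
proof -
  have p1: "norm p < 1" unfolding p_def using q1 by (simp add: norm_power power_less_one_iff)
  have p0: "p \<noteq> 0" unfolding p_def using q0 by simp
  have yne: "a*c/p \<noteq> 1" using y1 by auto
  obtain K where K: "K \<ge> 0" "\<And>m. norm (DD p a c m) \<le> K * norm (a*c/p) ^ m"
    using DD_bound[OF p1 adef cdef] by blast
  have Dt: "DD p a c \<longlonglongrightarrow> 0" using K by (intro geom_bound_tendsto0[OF y1]) auto
  have sCD: "summable (\<lambda>m. cc q m * DD p a c m)"
  proof (rule geom_bound_summable[OF y1])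
    fix m
    have "norm (cc q m * DD p a c m) \<le> 2 * (K * norm (a*c/p) ^ m)"
      unfolding norm_mult by (intro mult_mono cc_norm_le q1 K) auto
    then show "norm (cc q m * DD p a c m) \<le> (2*K) * norm (a*c/p) ^ m" by simp
  qed
  have part: "(\<Sum>n<N. (\<Sum>m\<le>n. cc q m) * ((1 - p^(2*n+1)) * tt p a c n * (a*c/p)^n))
      = (\<Sum>m<N. cc q m * DD p a c m) - DD p a c N * (\<Sum>m<N. cc q m)" for N
    using lhs_partial[of "DD p a c" "\<lambda>n. (1 - p^(2*n+1)) * tt p a c n * (a*c/p)^n" "cc q" N]
      DD_diff[OF p0 a0 c0 adef cdef yne]
    by (simp add: algebra_simps sum_subtractf sum_distrib_left sum_distrib_right)
  have "(\<lambda>N. (\<Sum>m<N. cc q m * DD p a c m) - DD p a c N * (\<Sum>m<N. cc q m))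
      \<longlonglongrightarrow> (\<Sum>m. cc q m * DD p a c m) - 0 * (\<Sum>m. cc q m)"
    by (intro tendsto_intros summable_LIMSEQ sCD cc_summable q1 Dt)
  then show ?thesis unfolding sums_def part by simp
qed



lemma int_fold:
  fixes f :: "int \<Rightarrow> complex"
  shows "(\<Sum>j\<in>{-int n..int n}. f j) = (\<Sum>m\<le>n. if m = 0 then f 0 else f (int m) + f (- int m))"
proof (induction n)
  case 0 then show ?case by simp
next
  case (Suc n)
  have e: "{-int (Suc n)..int (Suc n)} = insert (int (Suc n)) (insert (- int (Suc n)) {-int n..int n})"
    by auto
  have "(\<Sum>j\<in>{-int (Suc n)..int (Suc n)}. f j) = f (int (Suc n)) + (f (- int (Suc n)) + (\<Sum>j\<in>{-int n..int n}. f j))"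
    unfolding e by (subst sum.insert) (auto simp: sum.insert)
  then show ?case using Suc.IH by (simp add: algebra_simps)
qed

lemma jsum:
  fixes q :: complex
  shows "(\<Sum>j\<in>{-int n..int n}. (-1) powi j * q powi (j^2)) = (\<Sum>m\<le>n. cc q m)"
  unfolding int_fold
proof (intro sum.cong refl)
  fix m assume "m \<in> {..n}"
  have a: "(-1::complex) powi (int m) * q powi ((int m)^2) = (-1)^m * q^(m^2)"
    by (metis of_nat_power power_int_of_nat)
  have b: "(-1::complex) powi (- int m) * q powi ((- int m)^2) = (-1)^m * q^(m^2)"
  proof -
    have "(-1::complex) powi (- int m) = (-1)^m"
      by (simp add: power_int_minus flip: power_inverse)
    moreover have "q powi ((- int m)^2) = q^(m^2)"
      by (metis of_nat_power power_int_of_nat power2_minus)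
    ultimately show ?thesis by simp
  qed
  show "(if m = 0 then (-1) powi 0 * q powi (0^2) else (-1) powi (int m) * q powi ((int m)^2) + (-1) powi (- int m) * q powi ((- int m)^2))
      = cc q m"
    unfolding a b cc_def by simp
qed

theorem theorem8p5:
  fixes q a c :: complex
  assumes q0: "q \<noteq> 0" and q1: "norm q < 1"
    and a0: "a \<noteq> 0" and c0: "c \<noteq> 0"
    and adef: "\<And>n. qpoch (q^2 * a) (q^2) n \<noteq> 0"
    and cdef: "\<And>n. qpoch (q^2 * c) (q^2) n \<noteq> 0"
    and conv: "norm (a * c) < norm (q^2)"
  shows "(\<Sum>n. \<Sum>j\<in>{-int n..int n}.
            (-1) powi j * (1 - q ^ (4*n+2)) * q powi (j^2 - 2 * int n)
            * qpoch (q^2 / a) (q^2) n * qpoch (q^2 / c) (q^2) n * (a*c)^n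
            / (qpoch (q^2 * a) (q^2) n * qpoch (q^2 * c) (q^2) n))
       = qpoch_inf (q^2) (q^2) * qpoch_inf (a*c) (q^2)
           / (qpoch_inf (q^2 * a) (q^2) * qpoch_inf (q^2 * c) (q^2))
         * (\<Sum>n. qpoch (q^2 / a) (q^2) n * qpoch (q^2 / c) (q^2) n * qpoch q (q^2) n
               / (qpoch (-q) q (2*n) * qpoch (q^2) (q^2) n) * (a*c / q^2)^n)"
proof -
  define p where "p = q^2"
  define y where "y = a*c/p"
  have p1: "norm p < 1" unfolding p_def using q1 by (simp add: norm_power power_less_one_iff)
  have p0: "p \<noteq> 0" unfolding p_def using q0 by simp
  have y1: "norm y < 1" unfolding y_def using conv p0 by (simp add: norm_divide p_def divide_less_eq)
  have adef': "\<And>n. qpoch (p*a) p n \<noteq> 0" and cdef': "\<And>n. qpoch (p*c) p n \<noteq> 0"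
    using adef cdef unfolding p_def by auto
  have lterm: "(\<Sum>j\<in>{-int n..int n}.
            (-1) powi j * (1 - q ^ (4*n+2)) * q powi (j^2 - 2 * int n)
            * qpoch (q^2 / a) (q^2) n * qpoch (q^2 / c) (q^2) n * (a*c)^n
            / (qpoch (q^2 * a) (q^2) n * qpoch (q^2 * c) (q^2) n))
     = (\<Sum>m\<le>n. cc q m) * ((1 - p^(2*n+1)) * tt p a c n * (a*c/p)^n)" for n
  proof -
    define W where "W = (1 - q ^ (4*n+2)) * qpoch (q^2 / a) (q^2) n * qpoch (q^2 / c) (q^2) n * (a*c)^n
            / (qpoch (q^2 * a) (q^2) n * qpoch (q^2 * c) (q^2) n) / q^(2*n)"
    have "(\<Sum>j\<in>{-int n..int n}.
            (-1) powi j * (1 - q ^ (4*n+2)) * q powi (j^2 - 2 * int n)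
            * qpoch (q^2 / a) (q^2) n * qpoch (q^2 / c) (q^2) n * (a*c)^n
            / (qpoch (q^2 * a) (q^2) n * qpoch (q^2 * c) (q^2) n))
        = (\<Sum>j\<in>{-int n..int n}. ((-1) powi j * q powi (j^2)) * W)"
    proof (intro sum.cong refl)
      fix j :: int
      have "q powi (j^2 - 2 * int n) = q powi (j^2) / q^(2*n)"
        using q0 by (simp add: power_int_diff) (metis of_nat_mult of_nat_numeral power_int_of_nat)
      then show "(-1) powi j * (1 - q ^ (4*n+2)) * q powi (j^2 - 2 * int n)
            * qpoch (q^2 / a) (q^2) n * qpoch (q^2 / c) (q^2) n * (a*c)^n
            / (qpoch (q^2 * a) (q^2) n * qpoch (q^2 * c) (q^2) n) = ((-1) powi j * q powi (j^2)) * W"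
        unfolding W_def by (simp add: mult_ac)
    qed
    also have "\<dots> = (\<Sum>m\<le>n. cc q m) * W"
      unfolding sum_distrib_right[symmetric] jsum ..
    also have "W = (1 - p^(2*n+1)) * tt p a c n * (a*c/p)^n"
    proof -
      have e1: "q^(4*n+2) = p^(2*n+1)"
      proof -
        have "4*n+2 = 2*(2*n+1)" by simp
        then show ?thesis unfolding p_def by (simp only: power_mult)
      qed
      have e2: "(a*c)^n / q^(2*n) = (a*c/p)^n" unfolding p_def by (simp add: power_divide power_mult[symmetric])
      have g: "(1-Q)*X1*X2*AC/Y/Z = (1-Q)*(X1*X2/Y)*(AC/Z)" for Q X1 X2 AC Y Z :: complex
        by simp
      show ?thesis unfolding W_def g e1 e2 tt_def by (simp only: p_def)
    qed
    finally show ?thesis .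
  qed
  have L: "(\<Sum>n. \<Sum>j\<in>{-int n..int n}.
            (-1) powi j * (1 - q ^ (4*n+2)) * q powi (j^2 - 2 * int n)
            * qpoch (q^2 / a) (q^2) n * qpoch (q^2 / c) (q^2) n * (a*c)^n
            / (qpoch (q^2 * a) (q^2) n * qpoch (q^2 * c) (q^2) n)) = (\<Sum>m. cc q m * DD p a c m)"
    unfolding lterm using lhs_sums[OF q1 q0 a0 c0 adef' [unfolded p_def] cdef' [unfolded p_def]] y1
    unfolding p_def y_def by (simp add: sums_iff)
  define V where "V = (\<lambda>m. qpoch (p/a) p m * qpoch (p/c) p m * y^m)"
  have rterm: "qpoch (q^2 / a) (q^2) n * qpoch (q^2 / c) (q^2) n * qpoch q (q^2) n
               / (qpoch (-q) q (2*n) * qpoch (q^2) (q^2) n) * (a*c / q^2)^n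
      = qpoch (p/a) p n * qpoch (p/c) p n * (a*c/p)^n
              * (\<Sum>m\<le>n. cc q m / (qpoch p p (n-m) * qpoch p p (n+m)))" for n
    unfolding beta_id[OF q1 q0, symmetric] p_def by (simp add: mult_ac)
  have Rs: "(\<lambda>n. qpoch (q^2 / a) (q^2) n * qpoch (q^2 / c) (q^2) n * qpoch q (q^2) n
               / (qpoch (-q) q (2*n) * qpoch (q^2) (q^2) n) * (a*c / q^2)^n)
     sums (\<Sum>m. cc q m * V m * II p a c m)"
    unfolding rterm V_def y_def p_def using rhs_sums[OF q1 q0 a0 c0] y1 unfolding y_def p_def by simp
  define Pinf where "Pinf = qpoch_inf p p"
  define ACi where "ACi = qpoch_inf (a*c) p"
  define PA where "PA = qpoch_inf (p*a) p"
  define PC where "PC = qpoch_inf (p*c) p"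
  have Pinf0: "Pinf \<noteq> 0" unfolding Pinf_def by (rule qpoch_pp_inf_nonzero[OF p1])
  have ACi0: "ACi \<noteq> 0" unfolding ACi_def
  proof (rule qpoch_inf_nonzero[OF p1])
    fix k
    have "norm (a*c*p^k) \<le> norm (a*c) * 1"
      unfolding norm_mult norm_power using p1 by (intro mult_left_mono power_le_one) auto
    also have "\<dots> < 1" using conv p1 unfolding p_def by simp
    finally show "1 - a*c*p^k \<noteq> 0" by auto
  qed
  have PA0: "PA \<noteq> 0" unfolding PA_def by (intro qpoch_inf_nonzero[OF p1] qpoch_nonzero_factor adef')
  have PC0: "PC \<noteq> 0" unfolding PC_def by (intro qpoch_inf_nonzero[OF p1] qpoch_nonzero_factor cdef')
  have EEv: "EE p y = 1 / ((1 - y) * ACi)"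
  proof -
    have "qpoch_inf y p = (1 - y) * ACi"
      unfolding ACi_def using qpoch_inf_split[OF p1, of y 1] p0 by (simp add: qpoch_def y_def)
    then have X: "EE p y * ((1 - y) * ACi) = 1" using Euler[OF p1 y1] by simp
    then have Xn: "(1 - y) * ACi \<noteq> 0" by auto
    show ?thesis using X Xn by (simp add: eq_divide_eq)
  qed
  have KKv: "KK p y = EE p y / Pinf"
  proof -
    have "KK p y = (\<Sum>k. y^k / qpoch p p k / Pinf)" unfolding KK_def Pinf_def by (simp add: mult_ac)
    also have "\<dots> = EE p y / Pinf" unfolding EE_def by (rule suminf_divide[OF EE_summable[OF p1 y1]])
    finally show ?thesis .
  qed
  have tm: "qpoch_inf (q^2) (q^2) * qpoch_inf (a*c) (q^2) / (qpoch_inf (q^2 * a) (q^2) * qpoch_inf (q^2 * c) (q^2))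
      * (cc q m * V m * II p a c m) = cc q m * DD p a c m" for m
  proof -
    define Ai where "Ai = qpoch_inf (p*a*p^m) p"
    define Ci where "Ci = qpoch_inf (p*c*p^m) p"
    define Am where "Am = qpoch (p*a) p m"
    define Cm where "Cm = qpoch (p*c) p m"
    have sA: "PA = Am * Ai" unfolding PA_def Am_def Ai_def by (rule qpoch_inf_split[OF p1])
    have sC: "PC = Cm * Ci" unfolding PC_def Cm_def Ci_def by (rule qpoch_inf_split[OF p1])
    have nz: "Ai \<noteq> 0" "Ci \<noteq> 0" "Am \<noteq> 0" "Cm \<noteq> 0" using PA0 PC0 sA sC by auto
    have y1': "1 - y \<noteq> 0" using y1 by auto
    have ia: "qpoch_inf (a*p^m) p = (1 - a*p^m) * Ai"
    proof -
      have "Ai = qpoch_inf (a*p^m*p^1) p" unfolding Ai_def by (simp add: mult_ac)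
      then show ?thesis using qpoch_inf_split[OF p1, of "a*p^m" 1] by (simp add: qpoch_def)
    qed
    have ic: "qpoch_inf (c*p^m) p = (1 - c*p^m) * Ci"
    proof -
      have "Ci = qpoch_inf (c*p^m*p^1) p" unfolding Ci_def by (simp add: mult_ac)
      then show ?thesis using qpoch_inf_split[OF p1, of "c*p^m" 1] by (simp add: qpoch_def)
    qed
    have IIv: "II p a c m = (1 - a*p^m) * Ai * ((1 - c*p^m) * Ci) * (1 / ((1 - y) * ACi) / Pinf)"
    proof -
      have "II p a c m = qpoch_inf (a*p^m) p * qpoch_inf (c*p^m) p * KK p y"
        using II_closed[OF p1 p0 a0 c0] y1 unfolding y_def by simp
      then show ?thesis unfolding ia ic KKv EEv .
    qed
    have pref: "qpoch_inf (q^2) (q^2) * qpoch_inf (a*c) (q^2) / (qpoch_inf (q^2 * a) (q^2) * qpoch_inf (q^2 * c) (q^2))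
       = Pinf * ACi / (Am * Ai * (Cm * Ci))"
      unfolding sA[symmetric] sC[symmetric] Pinf_def ACi_def PA_def PC_def p_def ..
    have DDv: "DD p a c m = qpoch (p/a) p m * qpoch (p/c) p m / (Am * Cm) * y^m * (1 - a*p^m) * (1 - c*p^m) / (1 - y)"
      unfolding DD_def tt_def Am_def Cm_def y_def ..
    show ?thesis unfolding pref IIv DDv V_def using nz Pinf0 ACi0 y1'
      by (simp add: field_simps)
  qed
  have Rsum: "(\<Sum>n. qpoch (q^2 / a) (q^2) n * qpoch (q^2 / c) (q^2) n * qpoch q (q^2) n
               / (qpoch (-q) q (2*n) * qpoch (q^2) (q^2) n) * (a*c / q^2)^n) = (\<Sum>m. cc q m * V m * II p a c m)"
    using Rs by (simp add: sums_iff)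
  have "qpoch_inf (q^2) (q^2) * qpoch_inf (a*c) (q^2) / (qpoch_inf (q^2 * a) (q^2) * qpoch_inf (q^2 * c) (q^2))
      * (\<Sum>m. cc q m * V m * II p a c m)
     = (\<Sum>m. qpoch_inf (q^2) (q^2) * qpoch_inf (a*c) (q^2) / (qpoch_inf (q^2 * a) (q^2) * qpoch_inf (q^2 * c) (q^2))
      * (cc q m * V m * II p a c m))"
  proof (rule suminf_mult[symmetric])
    define Pref where "Pref = qpoch_inf (q^2) (q^2) * qpoch_inf (a*c) (q^2) / (qpoch_inf (q^2 * a) (q^2) * qpoch_inf (q^2 * c) (q^2))"
    have Pref0: "Pref \<noteq> 0" unfolding Pref_def using Pinf0 ACi0 PA0 PC0
      unfolding Pinf_def ACi_def PA_def PC_def p_def by simp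
    obtain K where K: "K \<ge> 0" "\<And>m. norm (DD p a c m) \<le> K * norm (a*c/p) ^ m"
      using DD_bound[OF p1 adef' cdef'] by blast
    have sDD: "summable (\<lambda>m. cc q m * DD p a c m)"
    proof (rule geom_bound_summable)
      show "norm (a*c/p) < 1" using y1 unfolding y_def .
      fix m
      have "norm (cc q m * DD p a c m) \<le> 2 * (K * norm (a*c/p) ^ m)"
        unfolding norm_mult by (intro mult_mono cc_norm_le q1 K) auto
      then show "norm (cc q m * DD p a c m) \<le> (2*K) * norm (a*c/p) ^ m" by simp
    qed
    have "(\<lambda>m. cc q m * V m * II p a c m) = (\<lambda>m. cc q m * DD p a c m / Pref)"
    proof
      fix m
      show "cc q m * V m * II p a c m = cc q m * DD p a c m / Pref"
        using tm[of m] Pref0 unfolding Pref_def[symmetric] by (simp add: field_simps)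
    qed
    then show "summable (\<lambda>m. cc q m * V m * II p a c m)"
      using summable_divide[OF sDD] by simp
  qed
  also have "\<dots> = (\<Sum>m. cc q m * DD p a c m)" unfolding tm ..
  finally show ?thesis unfolding L Rsum by simp
qed

end
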